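(* Let $R$ be a commutative ring. Every $w$-projective $w$-module over $R$ is $w$-split.
   Context: $R$ is a commutative ring with identity. For an $R$-module $M$ and $s\in R$, $\eta^M_s:M\to M$ is multiplication by $s$. GV-ideals and torsion: - An ideal $J$ of $R$ is a GV-ideal if $J$ is finitely generated and the natural map $R\to\mathrm{Hom}_R(J,R)$ is an isomorphism. $\mathrm{GV}(R)$ is the set of GV-ideals. - $\mathrm{tor_{GV}}(M)=\{x\in M: Jx=0\text{ for some }J\in\mathrm{GV}(R)\}$. - $M$ is GV-torsion if $\mathrm{tor_{GV}}(M)=M$, and GV-torsionfree if $\mathrm{tor_{GV}}(M)=0$. $w$-modules and $w$-projectivity: - A GV-torsionfree $M$ is a $w$-module if $\mathrm{Ext}^1_R(R/J,M)=0$ for all $J\in\mathrm{GV}(R)$. - For GV-torsionfree $M$, $M_w=\{x\in E(M): Jx\subseteq M\text{ for some }J\in\mathrm{GV}(R)\}$, where $E(M)$ is the injective envelope. - $M$ is $w$-projective if $\mathrm{Ext}^1_R(L(M),N)$ is GV-torsion for every torsionfree $w$-module $N$, where $L(M)=(M/\mathrm{tor_{GV}}(M))_w$. $w$-split: - A short exact sequence $0\to A\xrightarrow{f}B\xrightarrow{g}C\to 0$ is $w$-split if there exist $J=\langle d_1,\dots,d_n\rangle\in\mathrm{GV}(R)$ and $h_1,\dots,h_n\in\mathrm{Hom}_R(C,B)$ with $gh_k=\eta^C_{d_k}$ for all $k$. - $M$ is $w$-split if there is a $w$-split exact sequence $0\to K\to P\to M\to 0$ with $P$ projective. *)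

theory Defs
  imports "HOL-Algebra.Module" "HOL-Algebra.Ideal"
begin

definition lin :: "'r ring \<Rightarrow> ('r,'a) module \<Rightarrow> ('r,'b) module \<Rightarrow> ('a \<Rightarrow> 'b) \<Rightarrow> bool" where
  "lin R M N f \<longleftrightarrow> f \<in> carrier M \<rightarrow> carrier N
     \<and> (\<forall>x\<in>carrier M. \<forall>y\<in>carrier M. f (x \<oplus>\<^bsub>M\<^esub> y) = f x \<oplus>\<^bsub>N\<^esub> f y)
     \<and> (\<forall>r\<in>carrier R. \<forall>x\<in>carrier M. f (r \<odot>\<^bsub>M\<^esub> x) = r \<odot>\<^bsub>N\<^esub> f x)"

definition ring_mod :: "'r ring \<Rightarrow> ('r,'r) module" where
  "ring_mod R = \<lparr>carrier = carrier R, mult = mult R, one = one R, zero = zero R,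
                 add = add R, smult = mult R\<rparr>"

definition ideal_mod :: "'r ring \<Rightarrow> 'r set \<Rightarrow> ('r,'r) module" where
  "ideal_mod R J = (ring_mod R)\<lparr>carrier := J\<rparr>"

definition gv_ideal :: "'r ring \<Rightarrow> 'r set \<Rightarrow> bool" where
  "gv_ideal R J \<longleftrightarrow> ideal J R
     \<and> (\<exists>S. finite S \<and> S \<subseteq> carrier R \<and> J = Idl\<^bsub>R\<^esub> S)
     \<and> (\<forall>\<phi>. lin R (ideal_mod R J) (ring_mod R) \<phi> \<longrightarrow>
            (\<exists>!r. r \<in> carrier R \<and> (\<forall>a\<in>J. \<phi> a = r \<otimes>\<^bsub>R\<^esub> a)))"

definition tor_gv :: "'r ring \<Rightarrow> ('r,'a) module \<Rightarrow> 'a set" where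
  "tor_gv R M = {x \<in> carrier M. \<exists>J. gv_ideal R J \<and> (\<forall>a\<in>J. a \<odot>\<^bsub>M\<^esub> x = \<zero>\<^bsub>M\<^esub>)}"

definition gv_torsion :: "'r ring \<Rightarrow> ('r,'a) module \<Rightarrow> bool" where
  "gv_torsion R M \<longleftrightarrow> tor_gv R M = carrier M"

definition gv_torsionfree :: "'r ring \<Rightarrow> ('r,'a) module \<Rightarrow> bool" where
  "gv_torsionfree R M \<longleftrightarrow> tor_gv R M = {\<zero>\<^bsub>M\<^esub>}"

definition torsionfree :: "'r ring \<Rightarrow> ('r,'a) module \<Rightarrow> bool" where
  "torsionfree R M \<longleftrightarrow> (\<forall>s\<in>carrier R. (\<forall>t\<in>carrier R. s \<otimes>\<^bsub>R\<^esub> t = \<zero>\<^bsub>R\<^esub> \<longrightarrow> t = \<zero>\<^bsub>R\<^esub>) \<longrightarrow>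
       (\<forall>x\<in>carrier M. s \<odot>\<^bsub>M\<^esub> x = \<zero>\<^bsub>M\<^esub> \<longrightarrow> x = \<zero>\<^bsub>M\<^esub>))"

text \<open>Ext^1(R/J, M) = 0, computed from the presentation 0 \<rightarrow> J \<rightarrow> R \<rightarrow> R/J \<rightarrow> 0:
  Ext^1(R/J,M) = coker(Hom(R,M) \<rightarrow> Hom(J,M)), and Hom(R,M) = M via f \<mapsto> f 1.\<close>
definition ext1_quot_zero :: "'r ring \<Rightarrow> 'r set \<Rightarrow> ('r,'a) module \<Rightarrow> bool" where
  "ext1_quot_zero R J M \<longleftrightarrow>
     (\<forall>f. lin R (ideal_mod R J) M f \<longrightarrow> (\<exists>m\<in>carrier M. \<forall>a\<in>J. f a = a \<odot>\<^bsub>M\<^esub> m))"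

definition w_module :: "'r ring \<Rightarrow> ('r,'a) module \<Rightarrow> bool" where
  "w_module R M \<longleftrightarrow> gv_torsionfree R M \<and> (\<forall>J. gv_ideal R J \<longrightarrow> ext1_quot_zero R J M)"

definition quot_mod :: "'r ring \<Rightarrow> ('r,'a) module \<Rightarrow> 'a set \<Rightarrow> ('r,'a set) module" where
  "quot_mod R M T = \<lparr>carrier = a_rcosets\<^bsub>M\<^esub> T, mult = undefined, one = undefined,
      zero = T, add = set_add M,
      smult = (\<lambda>r X. \<Union>x\<in>X. T +>\<^bsub>M\<^esub> (r \<odot>\<^bsub>M\<^esub> x))\<rparr>"

definition injective_mod :: "'r ring \<Rightarrow> ('r,'e) module \<Rightarrow> bool" where
  "injective_mod R E \<longleftrightarrow> (\<forall>I f. ideal I R \<and> lin R (ideal_mod R I) E f \<longrightarrow>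
       (\<exists>e\<in>carrier E. \<forall>a\<in>I. f a = a \<odot>\<^bsub>E\<^esub> e))"

definition injective_envelope :: "'r ring \<Rightarrow> ('r,'a) module \<Rightarrow> ('r,'e) module \<Rightarrow> ('a \<Rightarrow> 'e) \<Rightarrow> bool" where
  "injective_envelope R M E \<iota> \<longleftrightarrow> module R E \<and> injective_mod R E
     \<and> lin R M E \<iota> \<and> inj_on \<iota> (carrier M)
     \<and> (\<forall>H. submodule H R E \<and> H \<noteq> {\<zero>\<^bsub>E\<^esub>} \<longrightarrow> H \<inter> \<iota> ` carrier M \<noteq> {\<zero>\<^bsub>E\<^esub>})"

definition w_hull :: "'r ring \<Rightarrow> ('r,'a) module \<Rightarrow> ('r,'e) module \<Rightarrow> ('a \<Rightarrow> 'e) \<Rightarrow> ('r,'e) module" where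
  "w_hull R M E \<iota> = E\<lparr>carrier := {x \<in> carrier E. \<exists>J. gv_ideal R J \<and>
        (\<forall>a\<in>J. a \<odot>\<^bsub>E\<^esub> x \<in> \<iota> ` carrier M)}\<rparr>"

definition free_mod :: "'r ring \<Rightarrow> ('r,'e) module \<Rightarrow> ('r,'e \<Rightarrow> 'r) module" where
  "free_mod R L = \<lparr>carrier = {c. (\<forall>x. c x \<in> carrier R) \<and> finite {x. c x \<noteq> \<zero>\<^bsub>R\<^esub>}
                                  \<and> {x. c x \<noteq> \<zero>\<^bsub>R\<^esub>} \<subseteq> carrier L},
      mult = undefined, one = undefined, zero = (\<lambda>x. \<zero>\<^bsub>R\<^esub>),
      add = (\<lambda>c d x. c x \<oplus>\<^bsub>R\<^esub> d x), smult = (\<lambda>r c x. r \<otimes>\<^bsub>R\<^esub> c x)\<rparr>"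

definition free_proj :: "'r ring \<Rightarrow> ('r,'e) module \<Rightarrow> ('e \<Rightarrow> 'r) \<Rightarrow> 'e" where
  "free_proj R L c = finsum L (\<lambda>x. c x \<odot>\<^bsub>L\<^esub> x) {x \<in> carrier L. c x \<noteq> \<zero>\<^bsub>R\<^esub>}"

definition free_ker :: "'r ring \<Rightarrow> ('r,'e) module \<Rightarrow> ('r,'e \<Rightarrow> 'r) module" where
  "free_ker R L = (free_mod R L)\<lparr>carrier :=
      {c \<in> carrier (free_mod R L). free_proj R L c = \<zero>\<^bsub>L\<^esub>}\<rparr>"

text \<open>With 0 \<rightarrow> K \<rightarrow> F \<rightarrow> L \<rightarrow> 0 the canonical free presentation of L,
  Ext^1(L,N) = Hom(K,N) / im Hom(F,N). It is GV-torsion iff each class [f] is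
  killed by some GV-ideal J, i.e. d f extends to F for every d \<in> J.\<close>
definition ext1_gv_torsion :: "'r ring \<Rightarrow> ('r,'e) module \<Rightarrow> ('r,'n) module \<Rightarrow> bool" where
  "ext1_gv_torsion R L N \<longleftrightarrow>
     (\<forall>f. lin R (free_ker R L) N f \<longrightarrow>
        (\<exists>J. gv_ideal R J \<and> (\<forall>d\<in>J. \<exists>g. lin R (free_mod R L) N g \<and>
            (\<forall>k\<in>carrier (free_ker R L). g k = d \<odot>\<^bsub>N\<^esub> f k))))"

text \<open>L(M) = (M / tor_GV(M))_w, computed inside an injective envelope E (carrier type 'e)
  of M/tor_GV(M). The test modules N range over modules with carrier type 'a \<Rightarrow> 'r.\<close>
definition w_projective :: "'r ring \<Rightarrow> ('r,'a) module \<Rightarrow> 'e itself \<Rightarrow> bool" where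
  "w_projective R M (_::'e itself) \<longleftrightarrow>
     (\<exists>(E::('r,'e) module) \<iota>.
        injective_envelope R (quot_mod R M (tor_gv R M)) E \<iota>
        \<and> (\<forall>N::('r,'a \<Rightarrow> 'r) module. module R N \<and> torsionfree R N \<and> w_module R N \<longrightarrow>
             ext1_gv_torsion R (w_hull R (quot_mod R M (tor_gv R M)) E \<iota>) N))"

definition projective_mod :: "'r ring \<Rightarrow> ('r,'p) module \<Rightarrow> 'q itself \<Rightarrow> bool" where
  "projective_mod R P (_::'q itself) \<longleftrightarrow> module R P \<and>
     (\<forall>(A::('r,'q) module) (B::('r,'q) module) g f.
        module R A \<and> module R B \<and> lin R A B g \<and> g ` carrier A = carrier B \<and> lin R P B f \<longrightarrow>
        (\<exists>h. lin R P A h \<and> (\<forall>x\<in>carrier P. g (h x) = f x)))"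

definition w_split_seq :: "'r ring \<Rightarrow> ('r,'c) module \<Rightarrow> ('r,'b) module \<Rightarrow> ('b \<Rightarrow> 'c) \<Rightarrow> bool" where
  "w_split_seq R C B g \<longleftrightarrow> (\<exists>J ds. gv_ideal R J \<and> set ds \<subseteq> carrier R \<and> J = Idl\<^bsub>R\<^esub> (set ds)
      \<and> (\<forall>d\<in>set ds. \<exists>h. lin R C B h \<and> (\<forall>x\<in>carrier C. g (h x) = d \<odot>\<^bsub>C\<^esub> x)))"

definition short_exact :: "'r ring \<Rightarrow> ('r,'k) module \<Rightarrow> ('r,'b) module \<Rightarrow> ('r,'c) module
     \<Rightarrow> ('k \<Rightarrow> 'b) \<Rightarrow> ('b \<Rightarrow> 'c) \<Rightarrow> bool" where
  "short_exact R A B C f g \<longleftrightarrow> module R A \<and> module R B \<and> module R C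
     \<and> lin R A B f \<and> lin R B C g \<and> inj_on f (carrier A) \<and> g ` carrier B = carrier C
     \<and> f ` carrier A = {y \<in> carrier B. g y = \<zero>\<^bsub>C\<^esub>}"

text \<open>The projective module P is taken with carrier type 'a \<Rightarrow> 'r (big enough for the
  free module on the carrier of M); projectivity is tested against modules of type 'q.\<close>
definition w_split :: "'r ring \<Rightarrow> ('r,'a) module \<Rightarrow> 'q itself \<Rightarrow> bool" where
  "w_split R M Q \<longleftrightarrow> (\<exists>(K::('r,'a \<Rightarrow> 'r) module) (P::('r,'a \<Rightarrow> 'r) module) f g.
      projective_mod R P Q \<and> short_exact R K P M f g \<and> w_split_seq R M P g)"

end

theory Submission
  imports Defs
begin

definition dlt :: "'r ring \<Rightarrow> 'x \<Rightarrow> 'x \<Rightarrow> 'r" where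
  "dlt R m = (\<lambda>y. if y = m then \<one>\<^bsub>R\<^esub> else \<zero>\<^bsub>R\<^esub>)"

lemma free_mod_carrier:
  "c \<in> carrier (free_mod R L) \<longleftrightarrow> (\<forall>x. c x \<in> carrier R) \<and> finite {x. c x \<noteq> \<zero>\<^bsub>R\<^esub>}
      \<and> {x. c x \<noteq> \<zero>\<^bsub>R\<^esub>} \<subseteq> carrier L"
  by (simp add: free_mod_def)

lemma free_mod_simps [simp]:
  "\<zero>\<^bsub>free_mod R L\<^esub> = (\<lambda>x. \<zero>\<^bsub>R\<^esub>)"
  "c \<oplus>\<^bsub>free_mod R L\<^esub> d = (\<lambda>x. c x \<oplus>\<^bsub>R\<^esub> d x)"
  "r \<odot>\<^bsub>free_mod R L\<^esub> c = (\<lambda>x. r \<otimes>\<^bsub>R\<^esub> c x)"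
  by (simp_all add: free_mod_def)

lemma free_ker_simps [simp]:
  "\<zero>\<^bsub>free_ker R L\<^esub> = (\<lambda>x. \<zero>\<^bsub>R\<^esub>)"
  "c \<oplus>\<^bsub>free_ker R L\<^esub> d = (\<lambda>x. c x \<oplus>\<^bsub>R\<^esub> d x)"
  "r \<odot>\<^bsub>free_ker R L\<^esub> c = (\<lambda>x. r \<otimes>\<^bsub>R\<^esub> c x)"
  "carrier (free_ker R L) = {c \<in> carrier (free_mod R L). free_proj R L c = \<zero>\<^bsub>L\<^esub>}"
  by (simp_all add: free_ker_def free_mod_def)

context fixes R :: "'r ring" (structure) assumes cr: "cring R"
begin

interpretation cring R by (rule cr)


lemma supp_add: "{x. c x \<oplus> d x \<noteq> \<zero>} \<subseteq> {x. c x \<noteq> \<zero>} \<union> {x. d x \<noteq> \<zero>}"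
  using r_zero zero_closed by auto

lemma supp_mult: "(\<forall>x. c x \<in> carrier R) \<Longrightarrow> r \<in> carrier R \<Longrightarrow> {x. r \<otimes> c x \<noteq> \<zero>} \<subseteq> {x. c x \<noteq> \<zero>}"
  by auto

lemma free_mod_add_closed:
  assumes "c \<in> carrier (free_mod R L)" "d \<in> carrier (free_mod R L)"
  shows "c \<oplus>\<^bsub>free_mod R L\<^esub> d \<in> carrier (free_mod R L)"
proof -
  have s: "{x. c x \<oplus> d x \<noteq> \<zero>} \<subseteq> {x. c x \<noteq> \<zero>} \<union> {x. d x \<noteq> \<zero>}" by (rule supp_add)
  show ?thesis using assms s unfolding free_mod_carrier free_mod_simps
    by (auto intro: finite_subset)
qed

lemma free_mod_smult_closed:
  assumes "r \<in> carrier R" "c \<in> carrier (free_mod R L)"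
  shows "r \<odot>\<^bsub>free_mod R L\<^esub> c \<in> carrier (free_mod R L)"
proof -
  have s: "{x. r \<otimes> c x \<noteq> \<zero>} \<subseteq> {x. c x \<noteq> \<zero>}" using assms
    by (intro supp_mult) (auto simp: free_mod_carrier)
  show ?thesis using assms s unfolding free_mod_carrier free_mod_simps
    by (auto intro: finite_subset)
qed

lemma free_mod_module: "module R (free_mod R L)"
proof (rule moduleI)
  show "cring R" by (rule cr)
  show "abelian_group (free_mod R L)"
  proof (rule abelian_groupI)
    fix x y assume "x \<in> carrier (free_mod R L)" "y \<in> carrier (free_mod R L)"
    then show "x \<oplus>\<^bsub>free_mod R L\<^esub> y \<in> carrier (free_mod R L)" by (rule free_mod_add_closed)
  next
    show "\<zero>\<^bsub>free_mod R L\<^esub> \<in> carrier (free_mod R L)" by (simp add: free_mod_carrier)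
  next
    fix x y z assume "x \<in> carrier (free_mod R L)" "y \<in> carrier (free_mod R L)" "z \<in> carrier (free_mod R L)"
    then show "x \<oplus>\<^bsub>free_mod R L\<^esub> y \<oplus>\<^bsub>free_mod R L\<^esub> z = x \<oplus>\<^bsub>free_mod R L\<^esub> (y \<oplus>\<^bsub>free_mod R L\<^esub> z)"
      by (auto simp: free_mod_carrier a_assoc)
  next
    fix x y assume "x \<in> carrier (free_mod R L)" "y \<in> carrier (free_mod R L)"
    then show "x \<oplus>\<^bsub>free_mod R L\<^esub> y = y \<oplus>\<^bsub>free_mod R L\<^esub> x"
      by (auto simp: free_mod_carrier a_comm)
  next
    fix x assume "x \<in> carrier (free_mod R L)"
    then show "\<zero>\<^bsub>free_mod R L\<^esub> \<oplus>\<^bsub>free_mod R L\<^esub> x = x"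
      by (auto simp: free_mod_carrier)
  next
    fix x assume x: "x \<in> carrier (free_mod R L)"
    have "(\<lambda>y. \<ominus> x y) \<in> carrier (free_mod R L)"
      using x unfolding free_mod_carrier
      by (auto elim!: finite_subset[rotated] simp: minus_equality[symmetric])
    moreover have "(\<lambda>y. \<ominus> x y) \<oplus>\<^bsub>free_mod R L\<^esub> x = \<zero>\<^bsub>free_mod R L\<^esub>"
      using x by (auto simp: free_mod_carrier l_neg)
    ultimately show "\<exists>y\<in>carrier (free_mod R L). y \<oplus>\<^bsub>free_mod R L\<^esub> x = \<zero>\<^bsub>free_mod R L\<^esub>" by blast
  qed
next
  fix a x assume "a \<in> carrier R" "x \<in> carrier (free_mod R L)"
  then show "a \<odot>\<^bsub>free_mod R L\<^esub> x \<in> carrier (free_mod R L)" by (rule free_mod_smult_closed)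
next
  fix a b x assume "a \<in> carrier R" "b \<in> carrier R" "x \<in> carrier (free_mod R L)"
  then show "(a \<oplus> b) \<odot>\<^bsub>free_mod R L\<^esub> x = a \<odot>\<^bsub>free_mod R L\<^esub> x \<oplus>\<^bsub>free_mod R L\<^esub> b \<odot>\<^bsub>free_mod R L\<^esub> x"
    by (auto simp: free_mod_carrier l_distr)
next
  fix a x y assume "a \<in> carrier R" "x \<in> carrier (free_mod R L)" "y \<in> carrier (free_mod R L)"
  then show "a \<odot>\<^bsub>free_mod R L\<^esub> (x \<oplus>\<^bsub>free_mod R L\<^esub> y) = a \<odot>\<^bsub>free_mod R L\<^esub> x \<oplus>\<^bsub>free_mod R L\<^esub> a \<odot>\<^bsub>free_mod R L\<^esub> y"
    by (auto simp: free_mod_carrier r_distr)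
next
  fix a b x assume "a \<in> carrier R" "b \<in> carrier R" "x \<in> carrier (free_mod R L)"
  then show "(a \<otimes> b) \<odot>\<^bsub>free_mod R L\<^esub> x = a \<odot>\<^bsub>free_mod R L\<^esub> (b \<odot>\<^bsub>free_mod R L\<^esub> x)"
    by (auto simp: free_mod_carrier m_assoc)
next
  fix x assume "x \<in> carrier (free_mod R L)"
  then show "\<one> \<odot>\<^bsub>free_mod R L\<^esub> x = x"
    by (auto simp: free_mod_carrier)
qed

end

definition fext :: "'r ring \<Rightarrow> ('r,'a) module \<Rightarrow> ('r,'b) module \<Rightarrow> ('a \<Rightarrow> 'b) \<Rightarrow> ('a \<Rightarrow> 'r) \<Rightarrow> 'b" where
  "fext R M A v c = finsum A (\<lambda>x. c x \<odot>\<^bsub>A\<^esub> v x) {x \<in> carrier M. c x \<noteq> \<zero>\<^bsub>R\<^esub>}"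

lemma free_proj_fext: "free_proj R M = fext R M M (\<lambda>x. x)"
  by (simp add: fun_eq_iff free_proj_def fext_def)

lemma lin_closed: "lin R X Y \<phi> \<Longrightarrow> x \<in> carrier X \<Longrightarrow> \<phi> x \<in> carrier Y"
  by (auto simp: lin_def)
lemma lin_add: "lin R X Y \<phi> \<Longrightarrow> x \<in> carrier X \<Longrightarrow> y \<in> carrier X \<Longrightarrow> \<phi> (x \<oplus>\<^bsub>X\<^esub> y) = \<phi> x \<oplus>\<^bsub>Y\<^esub> \<phi> y"
  by (auto simp: lin_def)
lemma lin_smult: "lin R X Y \<phi> \<Longrightarrow> r \<in> carrier R \<Longrightarrow> x \<in> carrier X \<Longrightarrow> \<phi> (r \<odot>\<^bsub>X\<^esub> x) = r \<odot>\<^bsub>Y\<^esub> \<phi> x"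
  by (auto simp: lin_def)

lemma lin_zero:
  assumes "module R X" "module R Y" "lin R X Y \<phi>"
  shows "\<phi> \<zero>\<^bsub>X\<^esub> = \<zero>\<^bsub>Y\<^esub>"
proof -
  interpret X: module R X by fact
  interpret Y: module R Y by fact
  have "\<phi> \<zero>\<^bsub>X\<^esub> = \<phi> \<zero>\<^bsub>X\<^esub> \<oplus>\<^bsub>Y\<^esub> \<phi> \<zero>\<^bsub>X\<^esub>"
    using lin_add[OF assms(3) X.zero_closed X.zero_closed] by simp
  then show ?thesis using lin_closed[OF assms(3) X.zero_closed]
    by (metis Y.add.r_cancel_one')
qed

lemma lin_finsum:
  assumes "module R X" "module R Y" "lin R X Y \<phi>" "finite S" "u \<in> S \<rightarrow> carrier X"
  shows "\<phi> (finsum X u S) = finsum Y (\<lambda>i. \<phi> (u i)) S"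
  using assms(4,5)
proof (induction S rule: finite_induct)
  case empty
  interpret X: module R X by fact
  interpret Y: module R Y by fact
  show ?case using lin_zero[OF assms(1-3)] by simp
next
  case (insert a S)
  interpret X: module R X by fact
  interpret Y: module R Y by fact
  have u: "u \<in> S \<rightarrow> carrier X" "u a \<in> carrier X" using insert by auto
  have "\<phi> (finsum X u (insert a S)) = \<phi> (u a \<oplus>\<^bsub>X\<^esub> finsum X u S)"
    using insert u by (simp add: X.finsum_insert)
  also have "\<dots> = \<phi> (u a) \<oplus>\<^bsub>Y\<^esub> \<phi> (finsum X u S)"
    using u assms(3) by (simp add: lin_add X.finsum_closed)
  also have "\<dots> = finsum Y (\<lambda>i. \<phi> (u i)) (insert a S)"
    using insert u lin_closed[OF assms(3)] by (subst Y.finsum_insert) (auto simp: Pi_def)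
  finally show ?case .
qed

lemma lin_comp: "lin R X Y f \<Longrightarrow> lin R Y Z g \<Longrightarrow> lin R X Z (\<lambda>x. g (f x))"
  unfolding lin_def Pi_def by (auto simp del: Pi_I')

context fixes R :: "'r ring" (structure) assumes cr: "cring R"
begin

interpretation cring R by (rule cr)

lemma free_mod_add_closed':
  "c \<in> carrier (free_mod R L) \<Longrightarrow> d \<in> carrier (free_mod R L) \<Longrightarrow> (\<lambda>x. c x \<oplus> d x) \<in> carrier (free_mod R L)"
  using free_mod_add_closed[OF cr] by simp

lemma free_mod_smult_closed':
  "r \<in> carrier R \<Longrightarrow> c \<in> carrier (free_mod R L) \<Longrightarrow> (\<lambda>x. r \<otimes> c x) \<in> carrier (free_mod R L)"
  using free_mod_smult_closed[OF cr] by simp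

lemma free_eval:
  assumes "finite S" "u \<in> S \<rightarrow> carrier (free_mod R L)"
  shows "finsum (free_mod R L) u S y = finsum R (\<lambda>i. u i y) S"
  using assms
proof (induction S rule: finite_induct)
  case empty
  interpret F: module R "free_mod R L" by (rule free_mod_module[OF cr])
  show ?case by simp
next
  case (insert a S)
  interpret F: module R "free_mod R L" by (rule free_mod_module[OF cr])
  have u: "u \<in> S \<rightarrow> carrier (free_mod R L)" "u a \<in> carrier (free_mod R L)" using insert by auto
  have "finsum (free_mod R L) u (insert a S) y = u a y \<oplus> finsum (free_mod R L) u S y"
    using insert u by (simp add: F.finsum_insert)
  also have "\<dots> = finsum R (\<lambda>i. u i y) (insert a S)"
    using insert u by (subst finsum_insert) (auto simp: Pi_def free_mod_carrier)
  finally show ?case .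
qed

end

context fixes R :: "'r ring" (structure) and M :: "('r,'a) module" assumes mo: "module R M"
begin

interpretation module R M by (rule mo)

lemma free_carrierD:
  assumes "c \<in> carrier (free_mod R M)"
  shows "\<And>x. c x \<in> carrier R" "finite {x. c x \<noteq> \<zero>}" "{x. c x \<noteq> \<zero>} \<subseteq> carrier M"
    "\<And>x. x \<notin> carrier M \<Longrightarrow> c x = \<zero>"
  using assms by (auto simp: free_mod_carrier)

lemma fext_eq:
  assumes "module R A" "v \<in> carrier M \<rightarrow> carrier A" "c \<in> carrier (free_mod R M)"
    "finite S" "{x. c x \<noteq> \<zero>} \<subseteq> S" "S \<subseteq> carrier M"
  shows "fext R M A v c = finsum A (\<lambda>x. c x \<odot>\<^bsub>A\<^esub> v x) S"
proof -
  interpret A: module R A by fact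
  have e: "{x \<in> carrier M. c x \<noteq> \<zero>} = {x. c x \<noteq> \<zero>}" using free_carrierD(3)[OF assms(3)] by auto
  show ?thesis unfolding fext_def e
    apply (rule A.add.finprod_mono_neutral_cong_left)
    using assms free_carrierD[OF assms(3)] by (auto simp: Pi_def)
qed

lemma fext_closed:
  assumes "module R A" "v \<in> carrier M \<rightarrow> carrier A" "c \<in> carrier (free_mod R M)"
  shows "fext R M A v c \<in> carrier A"
proof -
  interpret A: module R A by fact
  show ?thesis unfolding fext_def using assms free_carrierD[OF assms(3)]
    by (intro A.finsum_closed) (auto simp: Pi_def)
qed

lemma fext_lin:
  assumes "module R A" "v \<in> carrier M \<rightarrow> carrier A"
  shows "lin R (free_mod R M) A (fext R M A v)"
proof -
  interpret A: module R A by fact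
  interpret F: module R "free_mod R M" by (rule free_mod_module[OF is_cring])
  have vc: "\<And>x. x \<in> carrier M \<Longrightarrow> v x \<in> carrier A" using assms(2) by auto
  show ?thesis unfolding lin_def
  proof (intro conjI ballI)
    show "fext R M A v \<in> carrier (free_mod R M) \<rightarrow> carrier A"
      using fext_closed[OF assms] by auto
  next
    fix c d assume c: "c \<in> carrier (free_mod R M)" and d: "d \<in> carrier (free_mod R M)"
    let ?S = "{x. c x \<noteq> \<zero>} \<union> {x. d x \<noteq> \<zero>}"
    have fin: "finite ?S" and sub: "?S \<subseteq> carrier M" using free_carrierD[OF c] free_carrierD[OF d] by auto
    have cd: "c \<oplus>\<^bsub>free_mod R M\<^esub> d \<in> carrier (free_mod R M)" using c d free_mod_add_closed'[OF is_cring] by simp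
    have "fext R M A v (c \<oplus>\<^bsub>free_mod R M\<^esub> d) = finsum A (\<lambda>x. (c x \<oplus> d x) \<odot>\<^bsub>A\<^esub> v x) ?S"
      using fext_eq[OF assms cd fin _ sub] supp_add[OF is_cring, of c d] by simp
    also have "\<dots> = finsum A (\<lambda>x. c x \<odot>\<^bsub>A\<^esub> v x \<oplus>\<^bsub>A\<^esub> d x \<odot>\<^bsub>A\<^esub> v x) ?S"
      using sub free_carrierD[OF c] free_carrierD[OF d] vc
      by (intro A.finsum_cong') (auto simp: A.smult_l_distr)
    also have "\<dots> = finsum A (\<lambda>x. c x \<odot>\<^bsub>A\<^esub> v x) ?S \<oplus>\<^bsub>A\<^esub> finsum A (\<lambda>x. d x \<odot>\<^bsub>A\<^esub> v x) ?S"
      using sub free_carrierD[OF c] free_carrierD[OF d] vc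
      by (intro A.finsum_addf) (auto simp: Pi_def)
    also have "\<dots> = fext R M A v c \<oplus>\<^bsub>A\<^esub> fext R M A v d"
      using fext_eq[OF assms c fin _ sub] fext_eq[OF assms d fin _ sub] by auto
    finally show "fext R M A v (c \<oplus>\<^bsub>free_mod R M\<^esub> d) = fext R M A v c \<oplus>\<^bsub>A\<^esub> fext R M A v d" .
  next
    fix r c assume r: "r \<in> carrier R" and c: "c \<in> carrier (free_mod R M)"
    let ?S = "{x. c x \<noteq> \<zero>}"
    have fin: "finite ?S" and sub: "?S \<subseteq> carrier M" using free_carrierD[OF c] by auto
    have rc: "r \<odot>\<^bsub>free_mod R M\<^esub> c \<in> carrier (free_mod R M)" using r c free_mod_smult_closed'[OF is_cring] by simp
    have "fext R M A v (r \<odot>\<^bsub>free_mod R M\<^esub> c) = finsum A (\<lambda>x. (r \<otimes> c x) \<odot>\<^bsub>A\<^esub> v x) ?S"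
      using fext_eq[OF assms rc fin _ sub] supp_mult[OF is_cring, of c r] r free_carrierD[OF c] by simp
    also have "\<dots> = finsum A (\<lambda>x. r \<odot>\<^bsub>A\<^esub> (c x \<odot>\<^bsub>A\<^esub> v x)) ?S"
      using sub free_carrierD[OF c] vc r
      by (intro A.finsum_cong') (auto simp: A.smult_assoc1)
    also have "\<dots> = r \<odot>\<^bsub>A\<^esub> finsum A (\<lambda>x. c x \<odot>\<^bsub>A\<^esub> v x) ?S"
      using sub free_carrierD[OF c] vc r fin
      by (intro A.finsum_smult_ldistr[symmetric]) (auto simp: Pi_def)
    also have "\<dots> = r \<odot>\<^bsub>A\<^esub> fext R M A v c"
      using fext_eq[OF assms c fin _ sub] by auto
    finally show "fext R M A v (r \<odot>\<^bsub>free_mod R M\<^esub> c) = r \<odot>\<^bsub>A\<^esub> fext R M A v c" .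
  qed
qed

lemma fext_hom:
  assumes "module R A" "module R B" "lin R A B \<psi>" "v \<in> carrier M \<rightarrow> carrier A"
    "c \<in> carrier (free_mod R M)"
  shows "\<psi> (fext R M A v c) = fext R M B (\<lambda>x. \<psi> (v x)) c"
proof -
  interpret A: module R A by fact
  interpret B: module R B by fact
  have "\<psi> (fext R M A v c) = finsum B (\<lambda>x. \<psi> (c x \<odot>\<^bsub>A\<^esub> v x)) {x \<in> carrier M. c x \<noteq> \<zero>}"
    unfolding fext_def using assms free_carrierD[OF assms(5)]
    by (intro lin_finsum[OF assms(1-3)]) (auto simp: Pi_def)
  also have "\<dots> = fext R M B (\<lambda>x. \<psi> (v x)) c"
    unfolding fext_def using assms free_carrierD[OF assms(5)] lin_closed[OF assms(3)]
    by (intro B.finsum_cong') (auto simp: Pi_def lin_smult)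
  finally show ?thesis .
qed

lemma dlt_closed: "x \<in> carrier M \<Longrightarrow> dlt R x \<in> carrier (free_mod R M)"
  by (auto simp: free_mod_carrier dlt_def)

lemma free_decomp:
  assumes c: "c \<in> carrier (free_mod R M)"
  shows "fext R M (free_mod R M) (dlt R) c = c"
proof
  fix y
  interpret F: module R "free_mod R M" by (rule free_mod_module[OF is_cring])
  let ?S = "{x \<in> carrier M. c x \<noteq> \<zero>}"
  have fin: "finite ?S" using free_carrierD[OF c] by (auto elim: finite_subset[rotated])
  have "fext R M (free_mod R M) (dlt R) c y = finsum R (\<lambda>i. c i \<otimes> dlt R i y) ?S"
    unfolding fext_def using dlt_closed c free_carrierD[OF c]
    by (subst free_eval[OF is_cring fin]) (auto simp: Pi_def intro!: free_mod_smult_closed'[OF is_cring])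
  also have "\<dots> = finsum R (\<lambda>i. if y = i then c i else \<zero>) ?S"
    using free_carrierD[OF c] by (intro R.finsum_cong') (auto simp: dlt_def)
  also have "\<dots> = c y"
  proof (cases "y \<in> ?S")
    case True
    then show ?thesis using fin free_carrierD[OF c] by (intro R.add.finprod_singleton) auto
  next
    case False
    then have "c y = \<zero>" using free_carrierD[OF c] by auto
    moreover have "finsum R (\<lambda>i. if y = i then c i else \<zero>) ?S = \<zero>"
      using False by (intro R.add.finprod_one_eqI) auto
    ultimately show ?thesis by simp
  qed
  finally show "fext R M (free_mod R M) (dlt R) c y = c y" .
qed

lemma lin_free_unique:
  assumes "module R B" "lin R (free_mod R M) B \<psi>" "c \<in> carrier (free_mod R M)"
  shows "\<psi> c = fext R M B (\<lambda>x. \<psi> (dlt R x)) c"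
  using fext_hom[OF free_mod_module[OF is_cring] assms(1,2) _ assms(3), of "dlt R"]
    free_decomp[OF assms(3)] dlt_closed by auto

lemma free_projective: "projective_mod R (free_mod R M) Q"
  unfolding projective_mod_def
proof (intro conjI allI impI)
  show "module R (free_mod R M)" by (rule free_mod_module[OF is_cring])
  fix A B :: "('r,'q) module" and g f
  assume H: "module R A \<and> module R B \<and> lin R A B g \<and> g ` carrier A = carrier B \<and> lin R (free_mod R M) B f"
  then have A: "module R A" and B: "module R B" and g: "lin R A B g" and sj: "g ` carrier A = carrier B"
    and f: "lin R (free_mod R M) B f" by auto
  define s where "s x = (SOME a. a \<in> carrier A \<and> g a = f (dlt R x))" for x
  have s: "s x \<in> carrier A \<and> g (s x) = f (dlt R x)" if "x \<in> carrier M" for x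
  proof -
    have "f (dlt R x) \<in> carrier B" using lin_closed[OF f dlt_closed[OF that]] .
    then obtain a where "a \<in> carrier A" "g a = f (dlt R x)" using sj by force
    then show ?thesis unfolding s_def using someI[of "\<lambda>a. a \<in> carrier A \<and> g a = f (dlt R x)" a] by blast
  qed
  show "\<exists>h. lin R (free_mod R M) A h \<and> (\<forall>x\<in>carrier (free_mod R M). g (h x) = f x)"
  proof (intro exI conjI ballI)
    show "lin R (free_mod R M) A (fext R M A s)" using fext_lin[OF A] s by auto
    fix c assume c: "c \<in> carrier (free_mod R M)"
    have "g (fext R M A s c) = fext R M B (\<lambda>x. g (s x)) c"
      using fext_hom[OF A B g _ c] s by auto
    also have "\<dots> = fext R M B (\<lambda>x. f (dlt R x)) c"
    proof -
      interpret BB: module R B by (rule B)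
      show ?thesis unfolding fext_def using s lin_closed[OF f dlt_closed] free_carrierD[OF c]
        by (intro BB.finsum_cong') (auto simp: Pi_def)
    qed
    also have "\<dots> = f c" using lin_free_unique[OF B f c] by simp
    finally show "g (fext R M A s c) = f c" .
  qed
qed

end

lemma ideal_mod_simps [simp]:
  "carrier (ideal_mod R J) = J" "x \<oplus>\<^bsub>ideal_mod R J\<^esub> y = x \<oplus>\<^bsub>R\<^esub> y"
  "r \<odot>\<^bsub>ideal_mod R J\<^esub> x = r \<otimes>\<^bsub>R\<^esub> x" "\<zero>\<^bsub>ideal_mod R J\<^esub> = \<zero>\<^bsub>R\<^esub>"
  by (simp_all add: ideal_mod_def ring_mod_def)

lemma ring_mod_simps [simp]:
  "carrier (ring_mod R) = carrier R" "x \<oplus>\<^bsub>ring_mod R\<^esub> y = x \<oplus>\<^bsub>R\<^esub> y"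
  "r \<odot>\<^bsub>ring_mod R\<^esub> x = r \<otimes>\<^bsub>R\<^esub> x" "\<zero>\<^bsub>ring_mod R\<^esub> = \<zero>\<^bsub>R\<^esub>"
  by (simp_all add: ring_mod_def)

context fixes R :: "'r ring" (structure) assumes cr: "cring R"
begin

interpretation cring R by (rule cr)

lemma gv_ideal_sub: "gv_ideal R J \<Longrightarrow> J \<subseteq> carrier R"
proof -
  assume "gv_ideal R J"
  then have "ideal J R" by (simp add: gv_ideal_def)
  then show ?thesis using ideal.Icarr by fast
qed

lemma gv_unique:
  assumes J: "gv_ideal R J" and r: "r \<in> carrier R" and k: "\<forall>a\<in>J. r \<otimes> a = \<zero>"
  shows "r = \<zero>"
proof -
  have sub: "J \<subseteq> carrier R" by (rule gv_ideal_sub[OF J])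
  have "lin R (ideal_mod R J) (ring_mod R) (\<lambda>a. \<zero>)" by (simp add: lin_def)
  define P where "P r \<longleftrightarrow> r \<in> carrier R \<and> (\<forall>a\<in>J. \<zero> = r \<otimes> a)" for r
  have ex: "\<exists>!r. P r" unfolding P_def using J \<open>lin R (ideal_mod R J) (ring_mod R) (\<lambda>a. \<zero>)\<close>
    unfolding gv_ideal_def by (elim conjE allE impE) simp_all
  moreover have "P \<zero>" using sub unfolding P_def by auto
  moreover have "P r" using r k unfolding P_def by auto
  ultimately show ?thesis by (metis ex1E)
qed

end

context fixes R :: "'r ring" (structure) and M :: "('r,'a) module" assumes mo: "module R M"
begin

interpretation module R M by (rule mo)

lemma free_proj_lin: "lin R (free_mod R M) M (free_proj R M)"
  unfolding free_proj_fext using fext_lin[OF mo mo] by auto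

lemma free_proj_dlt: assumes m: "m \<in> carrier M" shows "free_proj R M (dlt R m) = m"
proof -
  have "free_proj R M (dlt R m) = finsum M (\<lambda>x. dlt R m x \<odot>\<^bsub>M\<^esub> x) {m}"
    unfolding free_proj_fext using m
    using dlt_closed[OF mo m, unfolded dlt_def] by (intro fext_eq[OF mo mo]) (auto simp: dlt_def)
  also have "\<dots> = m" using m by (simp add: dlt_def)
  finally show ?thesis .
qed

lemma free_ker_eq: "free_ker R M = (free_mod R M)\<lparr>carrier := carrier (free_ker R M)\<rparr>"
  by (simp add: free_ker_def)

lemma free_ker_submodule: "submodule (carrier (free_ker R M)) R (free_mod R M)"
proof -
  interpret F: module R "free_mod R M" by (rule free_mod_module[OF is_cring])
  have pl: "lin R (free_mod R M) M (free_proj R M)" by (rule free_proj_lin)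
  show ?thesis
  proof (rule F.submoduleI)
    show "carrier (free_ker R M) \<subseteq> carrier (free_mod R M)" by auto
    show "\<zero>\<^bsub>free_mod R M\<^esub> \<in> carrier (free_ker R M)"
      using lin_zero[OF F.module_axioms mo pl] by (simp add: free_mod_carrier)
  next
    fix a assume a: "a \<in> carrier (free_ker R M)"
    have "\<ominus>\<^bsub>free_mod R M\<^esub> a = (\<ominus> \<one>) \<odot>\<^bsub>free_mod R M\<^esub> a"
      using a F.smult_l_minus[of \<one> a] F.smult_one[of a] by (simp del: free_mod_simps)
    moreover have "free_proj R M ((\<ominus> \<one>) \<odot>\<^bsub>free_mod R M\<^esub> a) = \<zero>\<^bsub>M\<^esub>"
      using a lin_smult[OF pl, of "\<ominus> \<one>" a] by simp
    moreover have "(\<ominus> \<one>) \<odot>\<^bsub>free_mod R M\<^esub> a \<in> carrier (free_mod R M)" using a by (intro F.smult_closed) auto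
    ultimately show "\<ominus>\<^bsub>free_mod R M\<^esub> a \<in> carrier (free_ker R M)" by simp
  next
    fix a b assume a: "a \<in> carrier (free_ker R M)" and b: "b \<in> carrier (free_ker R M)"
    have "free_proj R M (a \<oplus>\<^bsub>free_mod R M\<^esub> b) = \<zero>\<^bsub>M\<^esub>"
      using a b lin_add[OF pl, of a b] by simp
    moreover have "a \<oplus>\<^bsub>free_mod R M\<^esub> b \<in> carrier (free_mod R M)" using a b by (intro F.add.m_closed) auto
    ultimately show "a \<oplus>\<^bsub>free_mod R M\<^esub> b \<in> carrier (free_ker R M)" by simp
  next
    fix r a assume r: "r \<in> carrier R" and a: "a \<in> carrier (free_ker R M)"
    have "free_proj R M (r \<odot>\<^bsub>free_mod R M\<^esub> a) = \<zero>\<^bsub>M\<^esub>"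
      using a r lin_smult[OF pl, of r a] by simp
    moreover have "r \<odot>\<^bsub>free_mod R M\<^esub> a \<in> carrier (free_mod R M)" using a r by (intro F.smult_closed) auto
    ultimately show "r \<odot>\<^bsub>free_mod R M\<^esub> a \<in> carrier (free_ker R M)" by simp
  qed
qed

lemma free_ker_module: "module R (free_ker R M)"
  using submodule.submodule_is_module[OF free_ker_submodule free_mod_module[OF is_cring]]
  by (simp add: free_ker_def)

lemma free_short_exact: "short_exact R (free_ker R M) (free_mod R M) M (\<lambda>x. x) (free_proj R M)"
  unfolding short_exact_def
proof (intro conjI)
  show "module R (free_ker R M)" by (rule free_ker_module)
  show "module R (free_mod R M)" by (rule free_mod_module[OF is_cring])
  show "module R M" by (rule mo)
  show "lin R (free_ker R M) (free_mod R M) (\<lambda>x. x)" by (auto simp: lin_def)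
  show "lin R (free_mod R M) M (free_proj R M)" by (rule free_proj_lin)
  show "inj_on (\<lambda>x. x) (carrier (free_ker R M))" by simp
  show "free_proj R M ` carrier (free_mod R M) = carrier M"
  proof
    show "free_proj R M ` carrier (free_mod R M) \<subseteq> carrier M" using lin_closed[OF free_proj_lin] by auto
    show "carrier M \<subseteq> free_proj R M ` carrier (free_mod R M)"
      using free_proj_dlt dlt_closed[OF mo] by (metis image_eqI subsetI)
  qed
  show "(\<lambda>x. x) ` carrier (free_ker R M) = {y \<in> carrier (free_mod R M). free_proj R M y = \<zero>\<^bsub>M\<^esub>}"
    by simp
qed

lemma free_ker_torsionfree: "torsionfree R (free_ker R M)"
  unfolding torsionfree_def
proof (intro ballI impI)
  fix s c assume s: "s \<in> carrier R" and nz: "\<forall>t\<in>carrier R. s \<otimes> t = \<zero> \<longrightarrow> t = \<zero>"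
    and c: "c \<in> carrier (free_ker R M)" and e: "s \<odot>\<^bsub>free_ker R M\<^esub> c = \<zero>\<^bsub>free_ker R M\<^esub>"
  have "\<And>x. s \<otimes> c x = \<zero>" using e by (simp add: fun_eq_iff)
  then have "\<And>x. c x = \<zero>" using nz c free_carrierD[OF mo, of c] by auto
  then show "c = \<zero>\<^bsub>free_ker R M\<^esub>" by (simp add: fun_eq_iff)
qed

end

context fixes R :: "'r ring" (structure) assumes cr: "cring R"
begin

interpretation cring R by (rule cr)

lemma ann_ideal:
  assumes t: "t \<in> carrier R"
  shows "ideal {a \<in> carrier R. t \<otimes> a = \<zero>} R"
proof (rule idealI)
  show "ring R" by (rule cring.axioms(1)[OF cr])
  show "subgroup {a \<in> carrier R. t \<otimes> a = \<zero>} (add_monoid R)"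
  proof (rule add.subgroupI)
    show "{a \<in> carrier R. t \<otimes> a = \<zero>} \<subseteq> carrier R" by auto
    show "{a \<in> carrier R. t \<otimes> a = \<zero>} \<noteq> {}" using t by (auto intro!: exI[of _ \<zero>])
  next
    fix a assume "a \<in> {a \<in> carrier R. t \<otimes> a = \<zero>}"
    then show "\<ominus> a \<in> {a \<in> carrier R. t \<otimes> a = \<zero>}" using t by (simp add: r_minus)
  next
    fix a b assume "a \<in> {a \<in> carrier R. t \<otimes> a = \<zero>}" "b \<in> {a \<in> carrier R. t \<otimes> a = \<zero>}"
    then show "a \<oplus> b \<in> {a \<in> carrier R. t \<otimes> a = \<zero>}" using t by (simp add: r_distr)
  qed
next
  fix a x assume "a \<in> {a \<in> carrier R. t \<otimes> a = \<zero>}" "x \<in> carrier R"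
  then show "x \<otimes> a \<in> {a \<in> carrier R. t \<otimes> a = \<zero>}" using t m_lcomm[of t x a] by simp
next
  fix a x assume "a \<in> {a \<in> carrier R. t \<otimes> a = \<zero>}" "x \<in> carrier R"
  then show "a \<otimes> x \<in> {a \<in> carrier R. t \<otimes> a = \<zero>}" using t by (simp add: m_assoc[symmetric])
qed

lemma gv_gen_unique:
  assumes J: "gv_ideal R J" "J = Idl S" "S \<subseteq> carrier R" and t: "t \<in> carrier R"
    and k: "\<forall>s\<in>S. t \<otimes> s = \<zero>"
  shows "t = \<zero>"
proof -
  have "Idl S \<subseteq> {a \<in> carrier R. t \<otimes> a = \<zero>}"
    using J(3) k by (intro genideal_minimal[OF ann_ideal[OF t]]) auto
  then show ?thesis using gv_unique[OF cr J(1) t] J(2) by auto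
qed

end

context fixes R :: "'r ring" (structure) and M :: "('r,'a) module" assumes mo: "module R M"
  and tor0: "tor_gv R M = {\<zero>\<^bsub>M\<^esub>}"
begin

interpretation module R M by (rule mo)

lemma gv_exists: "\<exists>J. gv_ideal R J"
proof -
  have "\<zero>\<^bsub>M\<^esub> \<in> tor_gv R M" using tor0 by simp
  then show ?thesis unfolding tor_gv_def by auto
qed

lemma free_ker_gv_torsionfree: "gv_torsionfree R (free_ker R M)"
  unfolding gv_torsionfree_def
proof
  interpret K: module R "free_ker R M" by (rule free_ker_module[OF mo])
  show "tor_gv R (free_ker R M) \<subseteq> {\<zero>\<^bsub>free_ker R M\<^esub>}"
  proof
    fix c assume "c \<in> tor_gv R (free_ker R M)"
    then obtain J where c: "c \<in> carrier (free_ker R M)" and J: "gv_ideal R J"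
      and k: "\<forall>a\<in>J. a \<odot>\<^bsub>free_ker R M\<^esub> c = \<zero>\<^bsub>free_ker R M\<^esub>"
      unfolding tor_gv_def by auto
    have cF: "c \<in> carrier (free_mod R M)" using c by simp
    have "c x = \<zero>" for x
    proof (rule gv_unique[OF is_cring J])
      show "c x \<in> carrier R" using free_carrierD[OF mo cF] by auto
      show "\<forall>a\<in>J. c x \<otimes> a = \<zero>"
      proof
        fix a assume a: "a \<in> J"
        then have "a \<otimes> c x = \<zero>" using k by (auto simp: fun_eq_iff)
        then show "c x \<otimes> a = \<zero>" using a gv_ideal_sub[OF is_cring J] free_carrierD[OF mo cF]
          using R.m_comm[of a "c x"] by auto
      qed
    qed
    then show "c \<in> {\<zero>\<^bsub>free_ker R M\<^esub>}" by (simp add: fun_eq_iff)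
  qed
  show "{\<zero>\<^bsub>free_ker R M\<^esub>} \<subseteq> tor_gv R (free_ker R M)"
  proof -
    obtain J where J: "gv_ideal R J" using gv_exists by auto
    have "\<forall>a\<in>J. a \<odot>\<^bsub>free_ker R M\<^esub> \<zero>\<^bsub>free_ker R M\<^esub> = \<zero>\<^bsub>free_ker R M\<^esub>"
      using gv_ideal_sub[OF is_cring J] K.smult_r_null by blast
    then show ?thesis using J K.zero_closed unfolding tor_gv_def by blast
  qed
qed

lemma free_ker_ext1:
  assumes J: "gv_ideal R J"
  shows "ext1_quot_zero R J (free_ker R M)"
  unfolding ext1_quot_zero_def
proof (intro allI impI)
  fix f assume f: "lin R (ideal_mod R J) (free_ker R M) f"
  have Jsub: "J \<subseteq> carrier R" by (rule gv_ideal_sub[OF is_cring J])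
  have fF: "f a \<in> carrier (free_mod R M)" if "a \<in> J" for a
    using lin_closed[OF f, of a] that by simp
  define c where "c x = (THE r. r \<in> carrier R \<and> (\<forall>a\<in>J. f a x = r \<otimes> a))" for x
  have cx: "c x \<in> carrier R \<and> (\<forall>a\<in>J. f a x = c x \<otimes> a)" for x
  proof -
    have "lin R (ideal_mod R J) (ring_mod R) (\<lambda>a. f a x)"
      unfolding lin_def
    proof (intro conjI ballI)
      show "(\<lambda>a. f a x) \<in> carrier (ideal_mod R J) \<rightarrow> carrier (ring_mod R)"
        using fF free_carrierD[OF mo] by auto
    next
      fix a b assume "a \<in> carrier (ideal_mod R J)" "b \<in> carrier (ideal_mod R J)"
      then show "f (a \<oplus>\<^bsub>ideal_mod R J\<^esub> b) x = f a x \<oplus>\<^bsub>ring_mod R\<^esub> f b x"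
        using lin_add[OF f, of a b] by simp
    next
      fix r a assume "r \<in> carrier R" "a \<in> carrier (ideal_mod R J)"
      then show "f (r \<odot>\<^bsub>ideal_mod R J\<^esub> a) x = r \<odot>\<^bsub>ring_mod R\<^esub> f a x"
        using lin_smult[OF f, of r a] by simp
    qed
    then have "\<exists>!r. r \<in> carrier R \<and> (\<forall>a\<in>J. f a x = r \<otimes> a)"
      using J unfolding gv_ideal_def by (elim conjE allE impE) simp_all
    then show ?thesis unfolding c_def by (rule theI')
  qed
  obtain S where S: "finite S" "S \<subseteq> carrier R" "J = Idl S" using J unfolding gv_ideal_def by auto
  have SJ: "S \<subseteq> J" using S genideal_self by auto
  let ?U = "\<Union>s\<in>S. {x. f s x \<noteq> \<zero>}"
  have Ufin: "finite ?U" using S(1) SJ fF free_carrierD[OF mo] by auto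
  have Usub: "?U \<subseteq> carrier M" using SJ fF free_carrierD[OF mo] by blast
  have supp: "{x. c x \<noteq> \<zero>} \<subseteq> ?U"
  proof
    fix x assume nz: "x \<in> {x. c x \<noteq> \<zero>}"
    show "x \<in> ?U"
    proof (rule ccontr)
      assume "x \<notin> ?U"
      have "\<forall>s\<in>S. c x \<otimes> s = \<zero>"
      proof
        fix s assume s: "s \<in> S"
        then have "f s x = c x \<otimes> s" using cx SJ by blast
        moreover have "f s x = \<zero>" using s \<open>x \<notin> ?U\<close> by blast
        ultimately show "c x \<otimes> s = \<zero>" by simp
      qed
      then have "c x = \<zero>" using gv_gen_unique[OF is_cring J S(3) S(2)] cx by auto
      then show False using nz by simp
    qed
  qed
  have cF: "c \<in> carrier (free_mod R M)"
    unfolding free_mod_carrier using cx supp Ufin Usub by (auto intro: finite_subset)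
  have fa: "f a = a \<odot>\<^bsub>free_mod R M\<^esub> c" if "a \<in> J" for a
    using cx that Jsub by (auto simp: fun_eq_iff R.m_comm)
  have pc: "free_proj R M c \<in> carrier M" using lin_closed[OF free_proj_lin[OF mo] cF] .
  have "free_proj R M c \<in> tor_gv R M"
    unfolding tor_gv_def
  proof (intro CollectI conjI exI[of _ J] ballI)
    show "free_proj R M c \<in> carrier M" by (rule pc)
    show "gv_ideal R J" by (rule J)
    fix a assume a: "a \<in> J"
    have "a \<odot>\<^bsub>M\<^esub> free_proj R M c = free_proj R M (a \<odot>\<^bsub>free_mod R M\<^esub> c)"
      using lin_smult[OF free_proj_lin[OF mo], of a c] a Jsub cF by auto
    also have "\<dots> = free_proj R M (f a)" using fa[OF a] by simp
    also have "\<dots> = \<zero>\<^bsub>M\<^esub>" using lin_closed[OF f, of a] a by simp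
    finally show "a \<odot>\<^bsub>M\<^esub> free_proj R M c = \<zero>\<^bsub>M\<^esub>" .
  qed
  then have "free_proj R M c = \<zero>\<^bsub>M\<^esub>" using tor0 by simp
  then have cK: "c \<in> carrier (free_ker R M)" using cF by simp
  show "\<exists>m\<in>carrier (free_ker R M). \<forall>a\<in>J. f a = a \<odot>\<^bsub>free_ker R M\<^esub> m"
    using cK fa by auto
qed

lemma free_ker_w_module: "w_module R (free_ker R M)"
  unfolding w_module_def using free_ker_gv_torsionfree free_ker_ext1 by auto

end

lemma w_hull_simps [simp]:
  "carrier (w_hull R Q E \<iota>) = {x \<in> carrier E. \<exists>J. gv_ideal R J \<and> (\<forall>a\<in>J. a \<odot>\<^bsub>E\<^esub> x \<in> \<iota> ` carrier Q)}"
  "x \<oplus>\<^bsub>w_hull R Q E \<iota>\<^esub> y = x \<oplus>\<^bsub>E\<^esub> y"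
  "r \<odot>\<^bsub>w_hull R Q E \<iota>\<^esub> x = r \<odot>\<^bsub>E\<^esub> x"
  "\<zero>\<^bsub>w_hull R Q E \<iota>\<^esub> = \<zero>\<^bsub>E\<^esub>"
  by (simp_all add: w_hull_def)

context fixes R :: "'r ring" (structure) and M :: "('r,'a) module"
  and E :: "('r,'e) module" and \<iota> :: "'a set \<Rightarrow> 'e"
  assumes mo: "module R M"
  and tor0: "tor_gv R M = {\<zero>\<^bsub>M\<^esub>}"
  and wM: "\<And>J. gv_ideal R J \<Longrightarrow> ext1_quot_zero R J M"
  and env: "injective_envelope R (quot_mod R M {\<zero>\<^bsub>M\<^esub>}) E \<iota>"
begin

interpretation module R M by (rule mo)

lemma E_module: "module R E" using env by (simp add: injective_envelope_def)

interpretation E: module R E by (rule E_module)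

lemma iota_lin: "lin R (quot_mod R M {\<zero>\<^bsub>M\<^esub>}) E \<iota>" using env by (simp add: injective_envelope_def)
lemma iota_inj: "inj_on \<iota> (carrier (quot_mod R M {\<zero>\<^bsub>M\<^esub>}))" using env by (simp add: injective_envelope_def)
lemma iota_ess: "submodule H R E \<Longrightarrow> H \<noteq> {\<zero>\<^bsub>E\<^esub>} \<Longrightarrow> H \<inter> \<iota> ` carrier (quot_mod R M {\<zero>\<^bsub>M\<^esub>}) \<noteq> {\<zero>\<^bsub>E\<^esub>}"
  using env by (simp add: injective_envelope_def)

lemma Q_carrier: "carrier (quot_mod R M {\<zero>\<^bsub>M\<^esub>}) = (\<lambda>m. {m}) ` carrier M"
  by (auto simp: quot_mod_def A_RCOSETS_def' a_r_coset_def')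

lemma Q_add: "x \<in> carrier M \<Longrightarrow> y \<in> carrier M \<Longrightarrow> {x} \<oplus>\<^bsub>quot_mod R M {\<zero>\<^bsub>M\<^esub>}\<^esub> {y} = {x \<oplus>\<^bsub>M\<^esub> y}"
  by (simp add: quot_mod_def set_add_def')

lemma Q_smult: "r \<in> carrier R \<Longrightarrow> x \<in> carrier M \<Longrightarrow> r \<odot>\<^bsub>quot_mod R M {\<zero>\<^bsub>M\<^esub>}\<^esub> {x} = {r \<odot>\<^bsub>M\<^esub> x}"
  by (simp add: quot_mod_def a_r_coset_def')

lemma psi_closed: "x \<in> carrier M \<Longrightarrow> \<iota> {x} \<in> carrier E"
  using lin_closed[OF iota_lin] Q_carrier by auto

lemma psi_add: "x \<in> carrier M \<Longrightarrow> y \<in> carrier M \<Longrightarrow> \<iota> {x \<oplus>\<^bsub>M\<^esub> y} = \<iota> {x} \<oplus>\<^bsub>E\<^esub> \<iota> {y}"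
  using lin_add[OF iota_lin, of "{x}" "{y}"] Q_carrier Q_add by auto

lemma psi_smult: "r \<in> carrier R \<Longrightarrow> x \<in> carrier M \<Longrightarrow> \<iota> {r \<odot>\<^bsub>M\<^esub> x} = r \<odot>\<^bsub>E\<^esub> \<iota> {x}"
  using lin_smult[OF iota_lin, of r "{x}"] Q_carrier Q_smult by auto

lemma psi_inj: "x \<in> carrier M \<Longrightarrow> y \<in> carrier M \<Longrightarrow> \<iota> {x} = \<iota> {y} \<Longrightarrow> x = y"
  using iota_inj Q_carrier unfolding inj_on_def by auto

lemma psi_zero: "\<iota> {\<zero>\<^bsub>M\<^esub>} = \<zero>\<^bsub>E\<^esub>"
proof -
  have "\<iota> {\<zero>\<^bsub>M\<^esub>} = \<iota> {\<zero>\<^bsub>M\<^esub>} \<oplus>\<^bsub>E\<^esub> \<iota> {\<zero>\<^bsub>M\<^esub>}"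
    using psi_add[of "\<zero>\<^bsub>M\<^esub>" "\<zero>\<^bsub>M\<^esub>"] by simp
  then show ?thesis using psi_closed[of "\<zero>\<^bsub>M\<^esub>"] by (metis E.add.r_cancel_one' zero_closed)
qed

lemma psi_image: "\<iota> ` carrier (quot_mod R M {\<zero>\<^bsub>M\<^esub>}) = (\<lambda>m. \<iota> {m}) ` carrier M"
  using Q_carrier by auto

lemma hull_carrier: "carrier (w_hull R (quot_mod R M {\<zero>\<^bsub>M\<^esub>}) E \<iota>) = (\<lambda>m. \<iota> {m}) ` carrier M"
proof
  show "(\<lambda>m. \<iota> {m}) ` carrier M \<subseteq> carrier (w_hull R (quot_mod R M {\<zero>\<^bsub>M\<^esub>}) E \<iota>)"
  proof
    fix e assume "e \<in> (\<lambda>m. \<iota> {m}) ` carrier M"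
    then obtain m where m: "m \<in> carrier M" "e = \<iota> {m}" by auto
    obtain J where J: "gv_ideal R J" using gv_exists[OF mo tor0] by auto
    have "\<forall>a\<in>J. a \<odot>\<^bsub>E\<^esub> e \<in> \<iota> ` carrier (quot_mod R M {\<zero>\<^bsub>M\<^esub>})"
      unfolding psi_image using m gv_ideal_sub[OF is_cring J] psi_smult[symmetric] by blast
    then show "e \<in> carrier (w_hull R (quot_mod R M {\<zero>\<^bsub>M\<^esub>}) E \<iota>)"
      using J m psi_closed by auto
  qed
next
  show "carrier (w_hull R (quot_mod R M {\<zero>\<^bsub>M\<^esub>}) E \<iota>) \<subseteq> (\<lambda>m. \<iota> {m}) ` carrier M"
  proof
    fix e assume "e \<in> carrier (w_hull R (quot_mod R M {\<zero>\<^bsub>M\<^esub>}) E \<iota>)"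
    then obtain J where e: "e \<in> carrier E" and J: "gv_ideal R J"
      and k: "\<forall>a\<in>J. a \<odot>\<^bsub>E\<^esub> e \<in> (\<lambda>m. \<iota> {m}) ` carrier M"
      by (auto simp: psi_image)
    have Jsub: "J \<subseteq> carrier R" by (rule gv_ideal_sub[OF is_cring J])
    define g where "g a = (THE m. m \<in> carrier M \<and> \<iota> {m} = a \<odot>\<^bsub>E\<^esub> e)" for a
    have g: "g a \<in> carrier M \<and> \<iota> {g a} = a \<odot>\<^bsub>E\<^esub> e" if a: "a \<in> J" for a
    proof -
      obtain m where "m \<in> carrier M" "\<iota> {m} = a \<odot>\<^bsub>E\<^esub> e" using k a by force
      then have "\<exists>!m. m \<in> carrier M \<and> \<iota> {m} = a \<odot>\<^bsub>E\<^esub> e" using psi_inj by metis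
      then show ?thesis unfolding g_def by (rule theI')
    qed
    have guniq: "g a = m" if "a \<in> J" "m \<in> carrier M" "\<iota> {m} = a \<odot>\<^bsub>E\<^esub> e" for a m
      using g[OF that(1)] that psi_inj by metis
    have glin: "lin R (ideal_mod R J) M g"
      unfolding lin_def
    proof (intro conjI ballI)
      show "g \<in> carrier (ideal_mod R J) \<rightarrow> carrier M" using g by auto
    next
      fix a b assume ab: "a \<in> carrier (ideal_mod R J)" "b \<in> carrier (ideal_mod R J)"
      then have a: "a \<in> J" and b: "b \<in> J" by auto
      have abJ: "a \<oplus> b \<in> J" using a b J unfolding gv_ideal_def
        by (meson additive_subgroup.a_closed ideal.axioms(1))
      have "\<iota> {g a \<oplus>\<^bsub>M\<^esub> g b} = (a \<oplus> b) \<odot>\<^bsub>E\<^esub> e"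
      proof -
        have ac: "a \<in> carrier R" "b \<in> carrier R" using a b Jsub by auto
        show ?thesis using g[OF a] g[OF b] psi_add ac e by (simp add: E.smult_l_distr)
      qed
      then show "g (a \<oplus>\<^bsub>ideal_mod R J\<^esub> b) = g a \<oplus>\<^bsub>M\<^esub> g b"
        using guniq[OF abJ] g[OF a] g[OF b] by simp
    next
      fix r a assume "r \<in> carrier R" "a \<in> carrier (ideal_mod R J)"
      then have r: "r \<in> carrier R" and a: "a \<in> J" by auto
      have raJ: "r \<otimes> a \<in> J" using a r J unfolding gv_ideal_def
        by (meson ideal.I_l_closed)
      have "\<iota> {r \<odot>\<^bsub>M\<^esub> g a} = (r \<otimes> a) \<odot>\<^bsub>E\<^esub> e"
        using g[OF a] psi_smult r a Jsub e by (auto simp: E.smult_assoc1)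
      then show "g (r \<odot>\<^bsub>ideal_mod R J\<^esub> a) = r \<odot>\<^bsub>M\<^esub> g a"
        using guniq[OF raJ] g[OF a] r by simp
    qed
    obtain m where m: "m \<in> carrier M" and gm: "\<forall>a\<in>J. g a = a \<odot>\<^bsub>M\<^esub> m"
      using wM[OF J] glin unfolding ext1_quot_zero_def by blast
    define y where "y = e \<ominus>\<^bsub>E\<^esub> \<iota> {m}"
    have y: "y \<in> carrier E" unfolding y_def using e psi_closed[OF m] by simp
    have ky: "a \<odot>\<^bsub>E\<^esub> y = \<zero>\<^bsub>E\<^esub>" if a: "a \<in> J" for a
    proof -
      have "a \<odot>\<^bsub>E\<^esub> e = \<iota> {a \<odot>\<^bsub>M\<^esub> m}" using g[OF a] gm a by simp
      also have "\<dots> = a \<odot>\<^bsub>E\<^esub> \<iota> {m}" using psi_smult a Jsub m by auto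
      finally have "a \<odot>\<^bsub>E\<^esub> e = a \<odot>\<^bsub>E\<^esub> \<iota> {m}" .
      moreover have ac: "a \<in> carrier R" using a Jsub by auto
      ultimately show ?thesis unfolding y_def a_minus_def using e psi_closed[OF m]
        by (simp add: E.smult_r_distr E.smult_r_minus E.r_neg)
    qed
    have "y = \<zero>\<^bsub>E\<^esub>"
    proof (rule ccontr)
      assume ynz: "y \<noteq> \<zero>\<^bsub>E\<^esub>"
      let ?H = "(\<lambda>r. r \<odot>\<^bsub>E\<^esub> y) ` carrier R"
      have Hsub: "submodule ?H R E"
      proof (rule E.submoduleI)
        show "?H \<subseteq> carrier E" using y by auto
        show "\<zero>\<^bsub>E\<^esub> \<in> ?H" using y by (auto intro!: image_eqI[of _ _ \<zero>])
      next
        fix a assume "a \<in> ?H"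
        then obtain r where r: "r \<in> carrier R" "a = r \<odot>\<^bsub>E\<^esub> y" by auto
        then have "\<ominus>\<^bsub>E\<^esub> a = (\<ominus> r) \<odot>\<^bsub>E\<^esub> y" using y by (simp add: E.smult_l_minus)
        then show "\<ominus>\<^bsub>E\<^esub> a \<in> ?H" using r by auto
      next
        fix a b assume "a \<in> ?H" "b \<in> ?H"
        then obtain r s where "r \<in> carrier R" "a = r \<odot>\<^bsub>E\<^esub> y" "s \<in> carrier R" "b = s \<odot>\<^bsub>E\<^esub> y" by auto
        then have "a \<oplus>\<^bsub>E\<^esub> b = (r \<oplus> s) \<odot>\<^bsub>E\<^esub> y" using y by (simp add: E.smult_l_distr)
        then show "a \<oplus>\<^bsub>E\<^esub> b \<in> ?H" using \<open>r \<in> carrier R\<close> \<open>s \<in> carrier R\<close> by auto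
      next
        fix a x assume "a \<in> carrier R" "x \<in> ?H"
        then obtain r where "r \<in> carrier R" "x = r \<odot>\<^bsub>E\<^esub> y" by auto
        then have "a \<odot>\<^bsub>E\<^esub> x = (a \<otimes> r) \<odot>\<^bsub>E\<^esub> y" using y \<open>a \<in> carrier R\<close> by (simp add: E.smult_assoc1)
        then show "a \<odot>\<^bsub>E\<^esub> x \<in> ?H" using \<open>r \<in> carrier R\<close> \<open>a \<in> carrier R\<close> by auto
      qed
      have "y \<in> ?H" using y by (auto intro!: image_eqI[of _ _ \<one>])
      then have "?H \<noteq> {\<zero>\<^bsub>E\<^esub>}" using ynz by auto
      then have "?H \<inter> (\<lambda>m. \<iota> {m}) ` carrier M \<noteq> {\<zero>\<^bsub>E\<^esub>}" using iota_ess[OF Hsub] psi_image by simp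
      moreover have "\<zero>\<^bsub>E\<^esub> \<in> ?H \<inter> (\<lambda>m. \<iota> {m}) ` carrier M"
        using y psi_zero by (auto intro!: image_eqI[of _ _ \<zero>] image_eqI[of _ _ "\<zero>\<^bsub>M\<^esub>"])
      ultimately obtain z where z: "z \<in> ?H" "z \<in> (\<lambda>m. \<iota> {m}) ` carrier M" "z \<noteq> \<zero>\<^bsub>E\<^esub>" by blast
      then obtain r m' where r: "r \<in> carrier R" "z = r \<odot>\<^bsub>E\<^esub> y" and m': "m' \<in> carrier M" "z = \<iota> {m'}" by auto
      have "m' \<in> tor_gv R M"
        unfolding tor_gv_def
      proof (intro CollectI conjI exI[of _ J] ballI)
        show "m' \<in> carrier M" by (rule m')
        show "gv_ideal R J" by (rule J)
        fix a assume a: "a \<in> J"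
        have "\<iota> {a \<odot>\<^bsub>M\<^esub> m'} = a \<odot>\<^bsub>E\<^esub> (r \<odot>\<^bsub>E\<^esub> y)" using psi_smult a Jsub m' r by auto
        also have "\<dots> = r \<odot>\<^bsub>E\<^esub> (a \<odot>\<^bsub>E\<^esub> y)"
        proof -
          have ac: "a \<in> carrier R" using a Jsub by auto
          show ?thesis by (metis E.smult_assoc1 R.m_comm ac r(1) y)
        qed
        also have "\<dots> = \<iota> {\<zero>\<^bsub>M\<^esub>}" using ky[OF a] r psi_zero by simp
        finally show "a \<odot>\<^bsub>M\<^esub> m' = \<zero>\<^bsub>M\<^esub>" using psi_inj a Jsub m' by auto
      qed
      then have "m' = \<zero>\<^bsub>M\<^esub>" using tor0 by simp
      then show False using z m' psi_zero by simp
    qed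
    then have "e \<oplus>\<^bsub>E\<^esub> \<ominus>\<^bsub>E\<^esub> \<iota> {m} = \<zero>\<^bsub>E\<^esub>" unfolding y_def by (simp add: a_minus_def)
    then have "\<ominus>\<^bsub>E\<^esub> (\<ominus>\<^bsub>E\<^esub> \<iota> {m}) = e"
      using e psi_closed[OF m] by (intro E.minus_equality) auto
    then have "e = \<iota> {m}" using psi_closed[OF m] by simp
    then show "e \<in> (\<lambda>m. \<iota> {m}) ` carrier M" using m by auto
  qed
qed


lemma psi_smult_mem: "r \<in> carrier R \<Longrightarrow> m \<in> carrier M \<Longrightarrow> r \<odot>\<^bsub>E\<^esub> \<iota> {m} \<in> (\<lambda>m. \<iota> {m}) ` carrier M"
  by (rule image_eqI[of _ _ "r \<odot>\<^bsub>M\<^esub> m"]) (simp_all add: psi_smult)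

lemmas [simp] = hull_carrier psi_smult_mem
declare w_hull_simps(1)[simp del]

lemma L_eq: "w_hull R (quot_mod R M {\<zero>\<^bsub>M\<^esub>}) E \<iota> = E\<lparr>carrier := (\<lambda>m. \<iota> {m}) ` carrier M\<rparr>"
proof -
  have "w_hull R (quot_mod R M {\<zero>\<^bsub>M\<^esub>}) E \<iota> = E\<lparr>carrier := carrier (w_hull R (quot_mod R M {\<zero>\<^bsub>M\<^esub>}) E \<iota>)\<rparr>"
    by (simp add: w_hull_def)
  then show ?thesis by (simp only: hull_carrier)
qed

lemma L_submodule: "submodule ((\<lambda>m. \<iota> {m}) ` carrier M) R E"
proof (rule E.submoduleI)
  show "(\<lambda>m. \<iota> {m}) ` carrier M \<subseteq> carrier E" using psi_closed by auto
  show "\<zero>\<^bsub>E\<^esub> \<in> (\<lambda>m. \<iota> {m}) ` carrier M" using psi_zero[symmetric] by auto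
next
  fix a assume "a \<in> (\<lambda>m. \<iota> {m}) ` carrier M"
  then obtain m where m: "m \<in> carrier M" "a = \<iota> {m}" by auto
  have "\<ominus>\<^bsub>E\<^esub> a = (\<ominus> \<one>) \<odot>\<^bsub>E\<^esub> \<iota> {m}" using m psi_closed[OF m(1)] by (simp add: E.smult_l_minus)
  also have "\<dots> = \<iota> {(\<ominus> \<one>) \<odot>\<^bsub>M\<^esub> m}" using m psi_smult by simp
  finally show "\<ominus>\<^bsub>E\<^esub> a \<in> (\<lambda>m. \<iota> {m}) ` carrier M" using m by auto
next
  fix a b assume "a \<in> (\<lambda>m. \<iota> {m}) ` carrier M" "b \<in> (\<lambda>m. \<iota> {m}) ` carrier M"
  then obtain m n where "m \<in> carrier M" "a = \<iota> {m}" "n \<in> carrier M" "b = \<iota> {n}" by auto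
  then show "a \<oplus>\<^bsub>E\<^esub> b \<in> (\<lambda>m. \<iota> {m}) ` carrier M" using psi_add[symmetric] by auto
next
  fix r a assume "r \<in> carrier R" "a \<in> (\<lambda>m. \<iota> {m}) ` carrier M"
  then obtain m where "m \<in> carrier M" "a = \<iota> {m}" by auto
  then show "r \<odot>\<^bsub>E\<^esub> a \<in> (\<lambda>m. \<iota> {m}) ` carrier M" using psi_smult[symmetric] \<open>r \<in> carrier R\<close> by auto
qed

lemma L_module: "module R (w_hull R (quot_mod R M {\<zero>\<^bsub>M\<^esub>}) E \<iota>)"
  unfolding L_eq by (rule submodule.submodule_is_module[OF L_submodule E_module])

lemma psi_lin: "lin R M (w_hull R (quot_mod R M {\<zero>\<^bsub>M\<^esub>}) E \<iota>) (\<lambda>m. \<iota> {m})"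
  unfolding lin_def L_eq using psi_add psi_smult by auto

definition alpha :: "('e \<Rightarrow> 'r) \<Rightarrow> 'a \<Rightarrow> 'r" where
  "alpha c = (\<lambda>x. if x \<in> carrier M then c (\<iota> {x}) else \<zero>)"

lemma alpha_closed:
  assumes c: "c \<in> carrier (free_mod R (w_hull R (quot_mod R M {\<zero>\<^bsub>M\<^esub>}) E \<iota>))"
  shows "alpha c \<in> carrier (free_mod R M)"
proof -
  have c1: "\<And>x. c x \<in> carrier R" and c2: "finite {x. c x \<noteq> \<zero>}" using c by (auto simp: free_mod_carrier)
  have "{x. alpha c x \<noteq> \<zero>} = (\<lambda>m. \<iota> {m}) -` {x. c x \<noteq> \<zero>} \<inter> carrier M"
    by (auto simp: alpha_def)
  moreover have "finite ((\<lambda>m. \<iota> {m}) -` {x. c x \<noteq> \<zero>} \<inter> carrier M)"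
    using c2 psi_inj by (intro finite_vimage_IntI) (auto simp: inj_on_def)
  ultimately show ?thesis unfolding free_mod_carrier using c1 by (auto simp: alpha_def)
qed

lemma alpha_lin: "lin R (free_mod R (w_hull R (quot_mod R M {\<zero>\<^bsub>M\<^esub>}) E \<iota>)) (free_mod R M) alpha"
  unfolding lin_def using alpha_closed by (auto simp: alpha_def fun_eq_iff)

lemma projL:
  assumes c: "c \<in> carrier (free_mod R (w_hull R (quot_mod R M {\<zero>\<^bsub>M\<^esub>}) E \<iota>))"
  shows "free_proj R (w_hull R (quot_mod R M {\<zero>\<^bsub>M\<^esub>}) E \<iota>) c = \<iota> {free_proj R M (alpha c)}"
proof -
  let ?L = "w_hull R (quot_mod R M {\<zero>\<^bsub>M\<^esub>}) E \<iota>"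
  interpret L: module R ?L by (rule L_module)
  have c1: "\<And>x. c x \<in> carrier R" using c by (auto simp: free_mod_carrier)
  let ?A = "{x \<in> carrier M. alpha c x \<noteq> \<zero>}"
  have fin: "finite ?A" using alpha_closed[OF c] by (auto simp: free_mod_carrier elim: finite_subset[rotated])
  have Aeq: "{e \<in> carrier ?L. c e \<noteq> \<zero>} = (\<lambda>m. \<iota> {m}) ` ?A"
    unfolding hull_carrier by (auto simp: alpha_def)
  have inj: "inj_on (\<lambda>m. \<iota> {m}) ?A" using psi_inj by (auto simp: inj_on_def)
  have "free_proj R ?L c = finsum ?L (\<lambda>e. c e \<odot>\<^bsub>?L\<^esub> e) ((\<lambda>m. \<iota> {m}) ` ?A)"
    unfolding free_proj_def Aeq ..
  also have "\<dots> = finsum ?L (\<lambda>x. c (\<iota> {x}) \<odot>\<^bsub>?L\<^esub> \<iota> {x}) ?A"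
  proof (rule L.finsum_reindex[OF _ inj])
    have "c (\<iota> {m}) \<odot>\<^bsub>E\<^esub> \<iota> {m} \<in> (\<lambda>m. \<iota> {m}) ` carrier M" if "m \<in> carrier M" for m
    proof
      show "c (\<iota> {m}) \<odot>\<^bsub>E\<^esub> \<iota> {m} = \<iota> {c (\<iota> {m}) \<odot>\<^bsub>M\<^esub> m}" using psi_smult c1 that by simp
      show "c (\<iota> {m}) \<odot>\<^bsub>M\<^esub> m \<in> carrier M" using c1 that by simp
    qed
    then show "(\<lambda>e. c e \<odot>\<^bsub>?L\<^esub> e) \<in> (\<lambda>m. \<iota> {m}) ` ?A \<rightarrow> carrier ?L" by auto
  qed
  also have "\<dots> = finsum ?L (\<lambda>x. \<iota> {alpha c x \<odot>\<^bsub>M\<^esub> x}) ?A"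
    using c1 psi_smult psi_closed by (intro L.finsum_cong') (auto simp: Pi_def hull_carrier alpha_def)
  also have "\<dots> = \<iota> {finsum M (\<lambda>x. alpha c x \<odot>\<^bsub>M\<^esub> x) ?A}"
    using alpha_closed[OF c] fin
    by (intro lin_finsum[OF mo L_module psi_lin, symmetric]) (auto simp: Pi_def free_mod_carrier)
  also have "\<dots> = \<iota> {free_proj R M (alpha c)}" unfolding free_proj_def ..
  finally show ?thesis .
qed

lemma lin_cong:
  assumes X: "module R X" and f: "lin R X Y f" and eq: "\<And>x. x \<in> carrier X \<Longrightarrow> f x = g x"
  shows "lin R X Y g"
proof -
  interpret X: module R X by (rule X)
  show ?thesis unfolding lin_def
  proof (intro conjI ballI)
    show "g \<in> carrier X \<rightarrow> carrier Y" using lin_closed[OF f] eq by auto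
  next
    fix x y assume "x \<in> carrier X" "y \<in> carrier X"
    then show "g (x \<oplus>\<^bsub>X\<^esub> y) = g x \<oplus>\<^bsub>Y\<^esub> g y" using lin_add[OF f] eq[symmetric] by simp
  next
    fix r x assume "r \<in> carrier R" "x \<in> carrier X"
    then show "g (r \<odot>\<^bsub>X\<^esub> x) = r \<odot>\<^bsub>Y\<^esub> g x" using lin_smult[OF f] eq[symmetric] by simp
  qed
qed

lemma projL_lin: "lin R (free_mod R (w_hull R (quot_mod R M {\<zero>\<^bsub>M\<^esub>}) E \<iota>)) (w_hull R (quot_mod R M {\<zero>\<^bsub>M\<^esub>}) E \<iota>)
   (free_proj R (w_hull R (quot_mod R M {\<zero>\<^bsub>M\<^esub>}) E \<iota>))"
  by (rule lin_cong[OF free_mod_module[OF is_cring] lin_comp[OF lin_comp[OF alpha_lin free_proj_lin[OF mo]] psi_lin]])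
    (simp add: projL)

lemma alpha_dlt: "m \<in> carrier M \<Longrightarrow> alpha (dlt R (\<iota> {m})) = dlt R m"
  using psi_inj by (auto simp: alpha_def dlt_def fun_eq_iff)

lemma dltL_closed: "m \<in> carrier M \<Longrightarrow> dlt R (\<iota> {m}) \<in> carrier (free_mod R (w_hull R (quot_mod R M {\<zero>\<^bsub>M\<^esub>}) E \<iota>))"
  by (rule dlt_closed[OF L_module]) (auto simp: hull_carrier)

lemma projL_dlt: "m \<in> carrier M \<Longrightarrow> free_proj R (w_hull R (quot_mod R M {\<zero>\<^bsub>M\<^esub>}) E \<iota>) (dlt R (\<iota> {m})) = \<iota> {m}"
  by (simp add: projL dltL_closed alpha_dlt free_proj_dlt[OF mo])

lemma alpha_ker_lin: "lin R (free_ker R (w_hull R (quot_mod R M {\<zero>\<^bsub>M\<^esub>}) E \<iota>)) (free_ker R M) alpha"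
  unfolding lin_def
proof (intro conjI ballI)
  show "alpha \<in> carrier (free_ker R (w_hull R (quot_mod R M {\<zero>\<^bsub>M\<^esub>}) E \<iota>)) \<rightarrow> carrier (free_ker R M)"
  proof
    fix c assume c: "c \<in> carrier (free_ker R (w_hull R (quot_mod R M {\<zero>\<^bsub>M\<^esub>}) E \<iota>))"
    then have cF: "c \<in> carrier (free_mod R (w_hull R (quot_mod R M {\<zero>\<^bsub>M\<^esub>}) E \<iota>))" by simp
    have "\<iota> {free_proj R M (alpha c)} = \<iota> {\<zero>\<^bsub>M\<^esub>}" using c projL[OF cF] psi_zero by simp
    then have "free_proj R M (alpha c) = \<zero>\<^bsub>M\<^esub>"
      using psi_inj lin_closed[OF free_proj_lin[OF mo] alpha_closed[OF cF]] by auto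
    then show "alpha c \<in> carrier (free_ker R M)" using alpha_closed[OF cF] by simp
  qed
qed (auto simp: alpha_def fun_eq_iff)


lemma ker_ops:
  "x \<oplus>\<^bsub>free_ker R L\<^esub> y = x \<oplus>\<^bsub>free_mod R L\<^esub> y"
  "r \<odot>\<^bsub>free_ker R L\<^esub> x = r \<odot>\<^bsub>free_mod R L\<^esub> x"
  "\<zero>\<^bsub>free_ker R L\<^esub> = \<zero>\<^bsub>free_mod R L\<^esub>"
  by (simp_all add: free_ker_def)

lemma lin_lincomb:
  assumes X: "module R X" and f: "lin R A X f" and g: "lin R A X g" and r: "r \<in> carrier R" and s: "s \<in> carrier R"
    and A: "module R A"
  shows "lin R A X (\<lambda>c. r \<odot>\<^bsub>X\<^esub> f c \<oplus>\<^bsub>X\<^esub> s \<odot>\<^bsub>X\<^esub> g c)"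
proof -
  interpret X: module R X by (rule X)
  interpret A: module R A by (rule A)
  show ?thesis unfolding lin_def
  proof (intro conjI ballI)
    show "(\<lambda>c. r \<odot>\<^bsub>X\<^esub> f c \<oplus>\<^bsub>X\<^esub> s \<odot>\<^bsub>X\<^esub> g c) \<in> carrier A \<rightarrow> carrier X"
      using lin_closed[OF f] lin_closed[OF g] r s by auto
  next
    fix x y assume xy: "x \<in> carrier A" "y \<in> carrier A"
    note cl = lin_closed[OF f xy(1)] lin_closed[OF f xy(2)] lin_closed[OF g xy(1)] lin_closed[OF g xy(2)]
    show "r \<odot>\<^bsub>X\<^esub> f (x \<oplus>\<^bsub>A\<^esub> y) \<oplus>\<^bsub>X\<^esub> s \<odot>\<^bsub>X\<^esub> g (x \<oplus>\<^bsub>A\<^esub> y) =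
          (r \<odot>\<^bsub>X\<^esub> f x \<oplus>\<^bsub>X\<^esub> s \<odot>\<^bsub>X\<^esub> g x) \<oplus>\<^bsub>X\<^esub> (r \<odot>\<^bsub>X\<^esub> f y \<oplus>\<^bsub>X\<^esub> s \<odot>\<^bsub>X\<^esub> g y)"
      using xy cl r s by (simp add: lin_add[OF f] lin_add[OF g] X.smult_r_distr X.a_ac)
  next
    fix t x assume tx: "t \<in> carrier R" "x \<in> carrier A"
    note cl = lin_closed[OF f tx(2)] lin_closed[OF g tx(2)]
    have 1: "r \<odot>\<^bsub>X\<^esub> (t \<odot>\<^bsub>X\<^esub> f x) = t \<odot>\<^bsub>X\<^esub> (r \<odot>\<^bsub>X\<^esub> f x)"
      using cl r tx by (metis X.smult_assoc1 R.m_comm)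
    have 2: "s \<odot>\<^bsub>X\<^esub> (t \<odot>\<^bsub>X\<^esub> g x) = t \<odot>\<^bsub>X\<^esub> (s \<odot>\<^bsub>X\<^esub> g x)"
      using cl s tx by (metis X.smult_assoc1 R.m_comm)
    show "r \<odot>\<^bsub>X\<^esub> f (t \<odot>\<^bsub>A\<^esub> x) \<oplus>\<^bsub>X\<^esub> s \<odot>\<^bsub>X\<^esub> g (t \<odot>\<^bsub>A\<^esub> x) =
          t \<odot>\<^bsub>X\<^esub> (r \<odot>\<^bsub>X\<^esub> f x \<oplus>\<^bsub>X\<^esub> s \<odot>\<^bsub>X\<^esub> g x)"
      using tx cl r s 1 2 by (simp add: lin_smult[OF f] lin_smult[OF g] X.smult_r_distr)
  qed
qed

lemma split_map:
  assumes d: "d \<in> carrier R"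
    and g: "lin R (free_mod R (w_hull R (quot_mod R M {\<zero>\<^bsub>M\<^esub>}) E \<iota>)) (free_ker R M) g"
    and gk: "\<forall>k\<in>carrier (free_ker R (w_hull R (quot_mod R M {\<zero>\<^bsub>M\<^esub>}) E \<iota>)). g k = d \<odot>\<^bsub>free_ker R M\<^esub> alpha k"
  shows "\<exists>h. lin R M (free_mod R M) h \<and> (\<forall>x\<in>carrier M. free_proj R M (h x) = d \<odot>\<^bsub>M\<^esub> x)"
proof -
  let ?L = "w_hull R (quot_mod R M {\<zero>\<^bsub>M\<^esub>}) E \<iota>"
  let ?F = "free_mod R M"
  let ?FL = "free_mod R ?L"
  interpret L: module R ?L by (rule L_module)
  interpret F: module R ?F by (rule free_mod_module[OF is_cring])
  interpret FL: module R ?FL by (rule free_mod_module[OF is_cring])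
  have gF: "lin R ?FL ?F g" using g unfolding lin_def by (auto simp: ker_ops simp del: free_mod_simps free_ker_simps(1-3))
  define T where "T c = d \<odot>\<^bsub>?F\<^esub> alpha c \<oplus>\<^bsub>?F\<^esub> (\<ominus> \<one>) \<odot>\<^bsub>?F\<^esub> g c" for c
  have Tlin: "lin R ?FL ?F T" unfolding T_def
    by (rule lin_lincomb[OF F.module_axioms alpha_lin gF d _ FL.module_axioms]) simp
  have neg: "(\<ominus> \<one>) \<odot>\<^bsub>X\<^esub> v = \<ominus>\<^bsub>X\<^esub> v" if "module R X" "v \<in> carrier X" for X :: "('r, 'z) module" and v
  proof -
    interpret X: module R X by (rule that(1))
    show ?thesis using that(2) by (simp add: X.smult_l_minus)
  qed
  have T0: "T k = \<zero>\<^bsub>?F\<^esub>" if k: "k \<in> carrier (free_ker R ?L)" for k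
  proof -
    have kF: "k \<in> carrier ?FL" using k by simp
    have "g k = d \<odot>\<^bsub>?F\<^esub> alpha k" using gk k by (simp add: ker_ops del: free_mod_simps free_ker_simps(1-3))
    moreover have "d \<odot>\<^bsub>?F\<^esub> alpha k \<in> carrier ?F" using alpha_closed[OF kF] d by (simp del: free_mod_simps)
    ultimately show ?thesis unfolding T_def using neg[OF F.module_axioms] by (simp del: free_mod_simps add: F.r_neg)
  qed
  have resp: "T c = T c'" if c: "c \<in> carrier ?FL" and c': "c' \<in> carrier ?FL"
    and eq: "free_proj R ?L c = free_proj R ?L c'" for c c'
  proof -
    define k where "k = c \<oplus>\<^bsub>?FL\<^esub> (\<ominus> \<one>) \<odot>\<^bsub>?FL\<^esub> c'"
    have kF: "k \<in> carrier ?FL" unfolding k_def using c c' by (simp del: free_mod_simps)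
    have pc: "free_proj R ?L c \<in> carrier ?L" by (rule lin_closed[OF projL_lin c])
    have "free_proj R ?L k = free_proj R ?L c \<oplus>\<^bsub>?L\<^esub> (\<ominus> \<one>) \<odot>\<^bsub>?L\<^esub> free_proj R ?L c'"
      unfolding k_def using c c' lin_add[OF projL_lin] lin_smult[OF projL_lin] by (simp del: free_mod_simps)
    also have "\<dots> = \<zero>\<^bsub>?L\<^esub>" using eq pc neg[OF L.module_axioms] L.r_neg by simp
    finally have "k \<in> carrier (free_ker R ?L)" using kF by (simp del: free_mod_simps)
    then have "T k = \<zero>\<^bsub>?F\<^esub>" by (rule T0)
    moreover have "T k = T c \<oplus>\<^bsub>?F\<^esub> \<ominus>\<^bsub>?F\<^esub> T c'"
      unfolding k_def using c c' lin_add[OF Tlin] lin_smult[OF Tlin] lin_closed[OF Tlin] neg[OF F.module_axioms]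
      by (simp del: free_mod_simps)
    ultimately have "\<ominus>\<^bsub>?F\<^esub> (\<ominus>\<^bsub>?F\<^esub> T c') = T c"
      using lin_closed[OF Tlin c] lin_closed[OF Tlin c'] by (intro F.minus_equality) auto
    then show ?thesis using lin_closed[OF Tlin c'] by (simp del: free_mod_simps)
  qed
  define h where "h m = T (dlt R (\<iota> {m}))" for m
  have hlin: "lin R M ?F h"
    unfolding lin_def
  proof (intro conjI ballI)
    show "h \<in> carrier M \<rightarrow> carrier ?F" unfolding h_def using lin_closed[OF Tlin dltL_closed] by auto
  next
    fix x y assume x: "x \<in> carrier M" and y: "y \<in> carrier M"
    have s: "dlt R (\<iota> {x}) \<oplus>\<^bsub>?FL\<^esub> dlt R (\<iota> {y}) \<in> carrier ?FL"
      using dltL_closed[OF x] dltL_closed[OF y] by (simp del: free_mod_simps)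
    have "free_proj R ?L (dlt R (\<iota> {x \<oplus>\<^bsub>M\<^esub> y})) = \<iota> {x \<oplus>\<^bsub>M\<^esub> y}"
      using x y by (intro projL_dlt) simp
    also have "\<dots> = free_proj R ?L (dlt R (\<iota> {x})) \<oplus>\<^bsub>?L\<^esub> free_proj R ?L (dlt R (\<iota> {y}))"
      using x y projL_dlt psi_add by simp
    also have "\<dots> = free_proj R ?L (dlt R (\<iota> {x}) \<oplus>\<^bsub>?FL\<^esub> dlt R (\<iota> {y}))"
      by (rule lin_add[OF projL_lin dltL_closed[OF x] dltL_closed[OF y], symmetric])
    finally have "free_proj R ?L (dlt R (\<iota> {x \<oplus>\<^bsub>M\<^esub> y})) = free_proj R ?L (dlt R (\<iota> {x}) \<oplus>\<^bsub>?FL\<^esub> dlt R (\<iota> {y}))" .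
    then have "h (x \<oplus>\<^bsub>M\<^esub> y) = T (dlt R (\<iota> {x}) \<oplus>\<^bsub>?FL\<^esub> dlt R (\<iota> {y}))"
      unfolding h_def using resp[OF dltL_closed s] x y by simp
    then show "h (x \<oplus>\<^bsub>M\<^esub> y) = h x \<oplus>\<^bsub>?F\<^esub> h y"
      unfolding h_def using lin_add[OF Tlin] dltL_closed x y by (simp del: free_mod_simps)
  next
    fix r x assume r: "r \<in> carrier R" and x: "x \<in> carrier M"
    have s: "r \<odot>\<^bsub>?FL\<^esub> dlt R (\<iota> {x}) \<in> carrier ?FL"
      using dltL_closed[OF x] r by (simp del: free_mod_simps)
    have "free_proj R ?L (dlt R (\<iota> {r \<odot>\<^bsub>M\<^esub> x})) = \<iota> {r \<odot>\<^bsub>M\<^esub> x}"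
      using x r by (intro projL_dlt) simp
    also have "\<dots> = r \<odot>\<^bsub>?L\<^esub> free_proj R ?L (dlt R (\<iota> {x}))"
      using x r projL_dlt psi_smult by simp
    also have "\<dots> = free_proj R ?L (r \<odot>\<^bsub>?FL\<^esub> dlt R (\<iota> {x}))"
      by (rule lin_smult[OF projL_lin r dltL_closed[OF x], symmetric])
    finally have "free_proj R ?L (dlt R (\<iota> {r \<odot>\<^bsub>M\<^esub> x})) = free_proj R ?L (r \<odot>\<^bsub>?FL\<^esub> dlt R (\<iota> {x}))" .
    then have "h (r \<odot>\<^bsub>M\<^esub> x) = T (r \<odot>\<^bsub>?FL\<^esub> dlt R (\<iota> {x}))"
      unfolding h_def using resp[OF dltL_closed s] x r by simp
    then show "h (r \<odot>\<^bsub>M\<^esub> x) = r \<odot>\<^bsub>?F\<^esub> h x"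
      unfolding h_def using lin_smult[OF Tlin] dltL_closed x r by (simp del: free_mod_simps)
  qed
  have hp: "free_proj R M (h x) = d \<odot>\<^bsub>M\<^esub> x" if x: "x \<in> carrier M" for x
  proof -
    let ?c = "dlt R (\<iota> {x})"
    have c: "?c \<in> carrier ?FL" by (rule dltL_closed[OF x])
    have gc: "g ?c \<in> carrier (free_ker R M)" by (rule lin_closed[OF g c])
    then have gcF: "g ?c \<in> carrier ?F" by simp
    have ac: "alpha ?c \<in> carrier ?F" by (rule alpha_closed[OF c])
    have "free_proj R M (h x) = d \<odot>\<^bsub>M\<^esub> free_proj R M (alpha ?c) \<oplus>\<^bsub>M\<^esub> (\<ominus> \<one>) \<odot>\<^bsub>M\<^esub> free_proj R M (g ?c)"
      unfolding h_def T_def using d ac gcF lin_add[OF free_proj_lin[OF mo]] lin_smult[OF free_proj_lin[OF mo]]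
      by (simp del: free_mod_simps)
    also have "\<dots> = d \<odot>\<^bsub>M\<^esub> x"
      using gc alpha_dlt[OF x] free_proj_dlt[OF mo x] d x by simp
    finally show ?thesis .
  qed
  show ?thesis using hlin hp by blast
qed

lemma split_exists:
  assumes ext: "ext1_gv_torsion R (w_hull R (quot_mod R M {\<zero>\<^bsub>M\<^esub>}) E \<iota>) (free_ker R M)"
  shows "\<exists>J. gv_ideal R J \<and> (\<forall>d\<in>J. \<exists>h. lin R M (free_mod R M) h \<and> (\<forall>x\<in>carrier M. free_proj R M (h x) = d \<odot>\<^bsub>M\<^esub> x))"
proof -
  obtain J where J: "gv_ideal R J"
    and Jg: "\<forall>d\<in>J. \<exists>g. lin R (free_mod R (w_hull R (quot_mod R M {\<zero>\<^bsub>M\<^esub>}) E \<iota>)) (free_ker R M) g \<and>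
            (\<forall>k\<in>carrier (free_ker R (w_hull R (quot_mod R M {\<zero>\<^bsub>M\<^esub>}) E \<iota>)).
               g k = d \<odot>\<^bsub>free_ker R M\<^esub> alpha k)"
    using ext alpha_ker_lin unfolding ext1_gv_torsion_def by blast
  have "\<forall>d\<in>J. \<exists>h. lin R M (free_mod R M) h \<and> (\<forall>x\<in>carrier M. free_proj R M (h x) = d \<odot>\<^bsub>M\<^esub> x)"
  proof
    fix d assume dJ: "d \<in> J"
    then have dR: "d \<in> carrier R" using gv_ideal_sub[OF is_cring J] by auto
    obtain g where g: "lin R (free_mod R (w_hull R (quot_mod R M {\<zero>\<^bsub>M\<^esub>}) E \<iota>)) (free_ker R M) g"
      and gk: "\<forall>k\<in>carrier (free_ker R (w_hull R (quot_mod R M {\<zero>\<^bsub>M\<^esub>}) E \<iota>)).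
               g k = d \<odot>\<^bsub>free_ker R M\<^esub> alpha k"
      using Jg dJ by blast
    show "\<exists>h. lin R M (free_mod R M) h \<and> (\<forall>x\<in>carrier M. free_proj R M (h x) = d \<odot>\<^bsub>M\<^esub> x)"
      by (rule split_map[OF dR g gk])
  qed
  then show ?thesis using J by blast
qed
end

theorem proposition2p8:
  fixes R :: "'r ring" and M :: "('r,'a) module"
  assumes "cring R"
    and "module R M"
    and "w_module R M"
    and "w_projective R M TYPE('e)"
  shows "w_split R M TYPE('q)"
proof -
  interpret cring R by (rule assms(1))
  have mo: "module R M" by (rule assms(2))
  have tor0: "tor_gv R M = {\<zero>\<^bsub>M\<^esub>}" using assms(3) by (simp add: w_module_def gv_torsionfree_def)
  have wM: "\<And>J. gv_ideal R J \<Longrightarrow> ext1_quot_zero R J M" using assms(3) by (simp add: w_module_def)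
  obtain E :: "('r,'e) module" and \<iota> where env: "injective_envelope R (quot_mod R M {\<zero>\<^bsub>M\<^esub>}) E \<iota>"
    and H: "\<forall>N::('r,'a \<Rightarrow> 'r) module. module R N \<and> torsionfree R N \<and> w_module R N \<longrightarrow>
             ext1_gv_torsion R (w_hull R (quot_mod R M {\<zero>\<^bsub>M\<^esub>}) E \<iota>) N"
    using assms(4) unfolding w_projective_def tor0 by blast
  have ext: "ext1_gv_torsion R (w_hull R (quot_mod R M {\<zero>\<^bsub>M\<^esub>}) E \<iota>) (free_ker R M)"
    using H free_ker_module[OF mo] free_ker_torsionfree[OF mo] free_ker_w_module[OF mo tor0] by blast
  obtain J where J: "gv_ideal R J"
    and Jh: "\<forall>d\<in>J. \<exists>h. lin R M (free_mod R M) h \<and> (\<forall>x\<in>carrier M. free_proj R M (h x) = d \<odot>\<^bsub>M\<^esub> x)"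
    using split_exists[OF mo tor0 wM env ext] by blast
  obtain S where S: "finite S" "S \<subseteq> carrier R" "J = Idl\<^bsub>R\<^esub> S" using J unfolding gv_ideal_def by auto
  obtain ds where ds: "set ds = S" using finite_list[OF S(1)] by blast
  have SJ: "S \<subseteq> J" using S genideal_self by auto
  have seq: "w_split_seq R M (free_mod R M) (free_proj R M)"
    unfolding w_split_seq_def
  proof (intro exI[of _ J] exI[of _ ds] conjI ballI)
    show "gv_ideal R J" by (rule J)
    show "set ds \<subseteq> carrier R" using ds S by simp
    show "J = Idl\<^bsub>R\<^esub> (set ds)" using ds S by simp
    fix d assume d: "d \<in> set ds"
    then have dJ: "d \<in> J" and dR: "d \<in> carrier R" using ds SJ S by auto
    show "\<exists>h. lin R M (free_mod R M) h \<and> (\<forall>x\<in>carrier M. free_proj R M (h x) = d \<odot>\<^bsub>M\<^esub> x)"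
      using Jh dJ by blast
  qed
  show ?thesis unfolding w_split_def
    using free_projective[OF mo] free_short_exact[OF mo] seq by blast
qed

end
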